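(* Let $R$ be a localizable archimedean partially ordered commutative ring and $\varphi\in\mathcal{K}(R)$. Then $\operatorname{dom}\widehat\varphi$ is a subring of $R$ and $\widehat\varphi\colon\operatorname{dom}\widehat\varphi\to\mathbb{R}$ is a positive ring morphism. Moreover, if $r\in R$ and $s\in\operatorname{dom}\widehat\varphi\cap\mathrm{Loc}(R)$ satisfy $r/s\in R^{\mathrm{bd}}_{\mathrm{loc}}$, then $r\in\operatorname{dom}\widehat\varphi$.
   Context: Rings are commutative with unit; subrings contain $1$; ring morphisms are unital. A partially ordered commutative ring is a commutative ring $R$ with partial order $\le$, $r\le s\Rightarrow r+t\le s+t$, positive cone $R^+$ closed under multiplication and containing all squares. $\mathbb{N}=\{1,2,\dots\}$, $\mathbb{N}_0=\mathbb{N}\cup\{0\}$. Archimedean: $kg+h\in R^+$ for all $k\in\mathbb{N}$ implies $g\in R^+$. $\mathrm{Loc}(R)$: the $s\in1+R^+$ with $rs\in R^+\Rightarrow r\in R^+$ for all $r$; localizable: each $r$ satisfies $-s\le r\le s$ for some $s\in\mathrm{Loc}(R)$. A ring morphism into $\mathbb{R}$ is positive if it maps $R^+$ (here $(\operatorname{dom}\widehat\varphi)\cap R^+$) into $[0,\infty)$. $\mathscr{C}_{\mathrm{a.e.}}(X)$ for a topological space $X$: continuous real functions defined on dense open subsets of $X$, modulo agreement on a dense open subset of the common domain, with pointwise operations on the intersection of domains. Each $a\in\mathscr{C}_{\mathrm{a.e.}}(X)$ has a unique representative $a_{\max}$ whose domain contains the domain of every representative and which restricts to each representative. $R_{\mathrm{loc}}$: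 fractions $r/s$ ($r\in R$, $s\in\mathrm{Loc}(R)$), $r/s=r'/s'$ iff $rs'=r's$, ordered by $p/q\le r/s$ iff $ps\le rq$. $R^{\mathrm{bd}}_{\mathrm{loc}}=\{a:\exists n\in\mathbb{N}_0,\ -n\le a\le n\}$. $\mathcal{K}(R)$: ring morphisms $\psi\colon R^{\mathrm{bd}}_{\mathrm{loc}}\to\mathbb{R}$ with $\psi(a)\ge0$ for $a\ge0$, weak-$*$ topology. $\mathrm{O}_{s<\infty}=\{\psi:\psi(1/s)>0\}$; for archimedean localizable $R$ these are dense open in $\mathcal{K}(R)$. For $r\in R$, $\widehat r\in\mathscr{C}_{\mathrm{a.e.}}(\mathcal{K}(R))$ is the class of $r_s\colon\mathrm{O}_{s<\infty}\to\mathbb{R}$, $\psi\mapsto\psi(1/s)^{-1}\psi(r/s)$, for any $s\in\mathrm{Loc}(R)$ with $r/s\in R^{\mathrm{bd}}_{\mathrm{loc}}$ (independent of $s$). Define $\operatorname{dom}\widehat\varphi=\{r\in R:\varphi\in\operatorname{dom}\widehat r_{\max}\}$ and $\widehat\varphi(r)=\widehat r_{\max}(\varphi)$ for $r\in\operatorname{dom}\widehat\varphi$. *)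

theory Defs
  imports "HOL-Analysis.Analysis"
begin

definition po_ring :: "('a::comm_ring_1 \<Rightarrow> 'a \<Rightarrow> bool) \<Rightarrow> bool" where
  "po_ring le \<longleftrightarrow>
     (\<forall>r. le r r) \<and> (\<forall>r s. le r s \<and> le s r \<longrightarrow> r = s) \<and>
     (\<forall>r s t. le r s \<and> le s t \<longrightarrow> le r t) \<and>
     (\<forall>r s t. le r s \<longrightarrow> le (r + t) (s + t)) \<and>
     (\<forall>a b. le 0 a \<and> le 0 b \<longrightarrow> le 0 (a * b)) \<and>
     (\<forall>a. le 0 (a * a))"

definition archimedean_po :: "('a::comm_ring_1 \<Rightarrow> 'a \<Rightarrow> bool) \<Rightarrow> bool" where
  "archimedean_po le \<longleftrightarrow>
     (\<forall>g h. (\<forall>k::nat. k \<ge> 1 \<longrightarrow> le 0 (of_nat k * g + h)) \<longrightarrow> le 0 g)"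

definition Loc :: "('a::comm_ring_1 \<Rightarrow> 'a \<Rightarrow> bool) \<Rightarrow> 'a set" where
  "Loc le = {s. le 0 (s - 1) \<and> (\<forall>r. le 0 (r * s) \<longrightarrow> le 0 r)}"

definition localizable :: "('a::comm_ring_1 \<Rightarrow> 'a \<Rightarrow> bool) \<Rightarrow> bool" where
  "localizable le \<longleftrightarrow> (\<forall>r. \<exists>s\<in>Loc le. le (- s) r \<and> le r s)"

section \<open>The localization R_loc, via representatives (r, s) standing for r/s\<close>

definition locfrac :: "('a::comm_ring_1 \<Rightarrow> 'a \<Rightarrow> bool) \<Rightarrow> ('a \<times> 'a) set" where
  "locfrac le = {(r, s). s \<in> Loc le}"

definition loc_eq :: "('a::comm_ring_1 \<times> 'a) \<Rightarrow> 'a \<times> 'a \<Rightarrow> bool" where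
  "loc_eq a b \<longleftrightarrow> fst a * snd b = fst b * snd a"

definition loc_le :: "('a::comm_ring_1 \<Rightarrow> 'a \<Rightarrow> bool) \<Rightarrow> 'a \<times> 'a \<Rightarrow> 'a \<times> 'a \<Rightarrow> bool" where
  "loc_le le a b \<longleftrightarrow> le (fst a * snd b) (fst b * snd a)"

definition loc_add :: "('a::comm_ring_1 \<times> 'a) \<Rightarrow> 'a \<times> 'a \<Rightarrow> 'a \<times> 'a" where
  "loc_add a b = (fst a * snd b + fst b * snd a, snd a * snd b)"

definition loc_mult :: "('a::comm_ring_1 \<times> 'a) \<Rightarrow> 'a \<times> 'a \<Rightarrow> 'a \<times> 'a" where
  "loc_mult a b = (fst a * fst b, snd a * snd b)"

definition bdloc :: "('a::comm_ring_1 \<Rightarrow> 'a \<Rightarrow> bool) \<Rightarrow> ('a \<times> 'a) set" where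
  "bdloc le = {a \<in> locfrac le. \<exists>n::nat.
      loc_le le (- of_nat n, 1) a \<and> loc_le le a (of_nat n, 1)}"

text \<open>A map psi : R_loc^bd -> real is encoded as a function on representatives
  which respects equality of fractions and is 0 off R_loc^bd (so that it is
  determined by its values on R_loc^bd).\<close>
definition Kset :: "('a::comm_ring_1 \<Rightarrow> 'a \<Rightarrow> bool) \<Rightarrow> ('a \<times> 'a \<Rightarrow> real) set" where
  "Kset le = {\<psi>.
     (\<forall>a\<in>bdloc le. \<forall>b\<in>bdloc le. loc_eq a b \<longrightarrow> \<psi> a = \<psi> b) \<and>
     \<psi> (1, 1) = 1 \<and>
     (\<forall>a\<in>bdloc le. \<forall>b\<in>bdloc le. \<psi> (loc_add a b) = \<psi> a + \<psi> b) \<and>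
     (\<forall>a\<in>bdloc le. \<forall>b\<in>bdloc le. \<psi> (loc_mult a b) = \<psi> a * \<psi> b) \<and>
     (\<forall>a\<in>bdloc le. loc_le le (0, 1) a \<longrightarrow> \<psi> a \<ge> 0) \<and>
     (\<forall>a. a \<notin> bdloc le \<longrightarrow> \<psi> a = 0)}"

text \<open>Weak-* topology = topology of pointwise convergence = subspace of the
  product topology.\<close>
definition Ktop :: "('a::comm_ring_1 \<Rightarrow> 'a \<Rightarrow> bool) \<Rightarrow> ('a \<times> 'a \<Rightarrow> real) topology" where
  "Ktop le = subtopology euclidean (Kset le)"

definition Ofin :: "('a::comm_ring_1 \<Rightarrow> 'a \<Rightarrow> bool) \<Rightarrow> 'a \<Rightarrow> ('a \<times> 'a \<Rightarrow> real) set" where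
  "Ofin le s = {\<psi> \<in> Kset le. \<psi> (1, s) > 0}"

text \<open>A representative: a pair (U, f) with U dense open and f continuous on U,
  f extended by 0 outside U (so the partial function is determined by (U,f)).\<close>
definition ae_rep :: "'b topology \<Rightarrow> 'b set \<Rightarrow> ('b \<Rightarrow> real) \<Rightarrow> bool" where
  "ae_rep X U f \<longleftrightarrow> openin X U \<and> X closure_of U = topspace X \<and>
     continuous_map (subtopology X U) euclideanreal f \<and> (\<forall>x. x \<notin> U \<longrightarrow> f x = 0)"

definition ae_eq :: "'b topology \<Rightarrow> 'b set \<times> ('b \<Rightarrow> real) \<Rightarrow> 'b set \<times> ('b \<Rightarrow> real) \<Rightarrow> bool" where
  "ae_eq X p q \<longleftrightarrow> (\<exists>W. openin X W \<and> X closure_of W = topspace X \<and>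
      W \<subseteq> fst p \<inter> fst q \<and> (\<forall>x\<in>W. snd p x = snd q x))"

definition ae_max :: "'b topology \<Rightarrow> 'b set \<times> ('b \<Rightarrow> real) \<Rightarrow> 'b set \<times> ('b \<Rightarrow> real)" where
  "ae_max X p = (THE m. ae_rep X (fst m) (snd m) \<and> ae_eq X m p \<and>
      (\<forall>V g. ae_rep X V g \<and> ae_eq X (V, g) p \<longrightarrow>
         V \<subseteq> fst m \<and> (\<forall>x\<in>V. snd m x = g x)))"

definition r_s :: "'a::comm_ring_1 \<Rightarrow> 'a \<Rightarrow> ('a \<times> 'a \<Rightarrow> real) \<Rightarrow> real" where
  "r_s r s \<psi> = inverse (\<psi> (1, s)) * \<psi> (r, s)"

text \<open>Representative (O_{s<inf}, r_s) of r-hat, for a chosen s in Loc(R) with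
  r/s bounded (the class is independent of the choice).\<close>
definition hat_rep :: "('a::comm_ring_1 \<Rightarrow> 'a \<Rightarrow> bool) \<Rightarrow> 'a \<Rightarrow> ('a \<times> 'a \<Rightarrow> real) set \<times> (('a \<times> 'a \<Rightarrow> real) \<Rightarrow> real)" where
  "hat_rep le r = (let s = (SOME s. s \<in> Loc le \<and> (r, s) \<in> bdloc le) in
      (Ofin le s, \<lambda>\<psi>. if \<psi> \<in> Ofin le s then r_s r s \<psi> else 0))"

definition hat_max :: "('a::comm_ring_1 \<Rightarrow> 'a \<Rightarrow> bool) \<Rightarrow> 'a \<Rightarrow> ('a \<times> 'a \<Rightarrow> real) set \<times> (('a \<times> 'a \<Rightarrow> real) \<Rightarrow> real)" where
  "hat_max le r = ae_max (Ktop le) (hat_rep le r)"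

definition dom_hat :: "('a::comm_ring_1 \<Rightarrow> 'a \<Rightarrow> bool) \<Rightarrow> ('a \<times> 'a \<Rightarrow> real) \<Rightarrow> 'a set" where
  "dom_hat le \<phi> = {r. \<phi> \<in> fst (hat_max le r)}"

definition phi_hat :: "('a::comm_ring_1 \<Rightarrow> 'a \<Rightarrow> bool) \<Rightarrow> ('a \<times> 'a \<Rightarrow> real) \<Rightarrow> 'a \<Rightarrow> real" where
  "phi_hat le \<phi> r = snd (hat_max le r) \<phi>"

end

theory Submission
  imports Defs "HOL-Analysis.Analysis"
begin

lemma alg_add:
  fixes a b a1 b1 a2 b2 c d a' b' a1' b1' a2' b2' :: "'a::comm_ring_1"
  assumes h1: "a * (b1 * (d * b2)) = (a1 * (d * b2) + c * a2 * b1) * b"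
    and h2: "a' * (b1' * (d * b2')) = (a1' * (d * b2') + c * a2' * b1') * b'"
  shows "(a * b' + a' * b) * (b1 * b1' * (d * (b2 * b2'))) =
    ((a1 * b1' + a1' * b1) * (d * (b2 * b2')) + c * (a2 * b2' + a2' * b2) * (b1 * b1')) * (b * b')"
proof -
  have "(a * b' + a' * b) * (b1 * b1' * (d * (b2 * b2'))) = (a * (b1 * (d * b2))) * (b' * b1' * b2') + (a' * (b1' * (d * b2'))) * (b * b1 * b2)"
    by (simp add: algebra_simps)
  also have "\<dots> = ((a1 * (d * b2) + c * a2 * b1) * b) * (b' * b1' * b2') + ((a1' * (d * b2') + c * a2' * b1') * b') * (b * b1 * b2)"
    by (simp only: h1 h2)
  also have "\<dots> = ((a1 * b1' + a1' * b1) * (d * (b2 * b2')) + c * (a2 * b2' + a2' * b2) * (b1 * b1')) * (b * b')"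
    by (simp add: algebra_simps)
  finally show ?thesis .
qed

lemma alg_mult:
  fixes a b a1 b1 a2 b2 c d a' b' a1' b1' a2' b2' :: "'a::comm_ring_1"
  assumes h1: "a * (b1 * (d * b2)) = (a1 * (d * b2) + c * a2 * b1) * b"
    and h2: "a' * (b1' * (d * b2')) = (a1' * (d * b2') + c * a2' * b1') * b'"
  shows "a * a' * (b1 * b1' * (d * d * (b2 * b2')) * (d * (b1 * b2' * (b2 * b1')))) =
    ((a1 * a1' * (d * d * (b2 * b2')) + c * c * (a2 * a2') * (b1 * b1')) * (d * (b1 * b2' * (b2 * b1'))) +
     c * (a1 * a2' * (b2 * b1') + a2 * a1' * (b1 * b2')) * (b1 * b1' * (d * d * (b2 * b2')))) * (b * b')"
proof -
  define E where "E = d * (b1 * b2' * (b2 * b1'))"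
  have "a * a' * (b1 * b1' * (d * d * (b2 * b2')) * (d * (b1 * b2' * (b2 * b1')))) = (a * (b1 * (d * b2))) * (a' * (b1' * (d * b2'))) * E"
    unfolding E_def by (simp add: algebra_simps)
  also have "\<dots> = ((a1 * (d * b2) + c * a2 * b1) * b) * ((a1' * (d * b2') + c * a2' * b1') * b') * E"
    by (simp only: h1 h2)
  also have "\<dots> = ((a1 * a1' * (d * d * (b2 * b2')) + c * c * (a2 * a2') * (b1 * b1')) * (d * (b1 * b2' * (b2 * b1'))) +
     c * (a1 * a2' * (b2 * b1') + a2 * a1' * (b1 * b2')) * (b1 * b1' * (d * d * (b2 * b2')))) * (b * b')"
    unfolding E_def by (simp add: algebra_simps)
  finally show ?thesis .
qed

lemma alg_tot:
  fixes a1 b1 a2 b2 a3 b3 a4 b4 c d :: "'a::comm_ring_1"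
  assumes h1: "- (b1 * (d * b2)) = a1 * (d * b2) + c * a2 * b1"
    and h2: "- (b3 * (d * b4)) = a3 * (d * b4) + - c * a4 * b3"
  shows "((a1 * b3 + a3 * b1) * (b1 * b3) + a1 * a3 * (b1 * b3)) * (d * d * (b2 * b4)) + c * c * (a2 * a4) * (b1 * b3 * (b1 * b3))
     = - (b1 * b3 * (b1 * b3) * (d * d * (b2 * b4)))"
proof -
  have "(a1 + b1) * (d * b2) = (a1 * (d * b2) + c * a2 * b1) + b1 * (d * b2) - c * a2 * b1" by (simp add: algebra_simps)
  also have "\<dots> = - (c * a2 * b1)" unfolding h1[symmetric] by simp
  finally have e1: "(a1 + b1) * (d * b2) = - (c * a2 * b1)" .
  have "(a3 + b3) * (d * b4) = (a3 * (d * b4) + - c * a4 * b3) + b3 * (d * b4) + c * a4 * b3" by (simp add: algebra_simps)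
  also have "\<dots> = c * a4 * b3" unfolding h2[symmetric] by simp
  finally have e2: "(a3 + b3) * (d * b4) = c * a4 * b3" .
  have "((a1 * b3 + a3 * b1) * (b1 * b3) + a1 * a3 * (b1 * b3)) * (d * d * (b2 * b4)) + c * c * (a2 * a4) * (b1 * b3 * (b1 * b3))
     + (b1 * b3 * (b1 * b3) * (d * d * (b2 * b4)))
     = b1 * b3 * (((a1 + b1) * (d * b2)) * ((a3 + b3) * (d * b4)) + c * c * (a2 * a4) * (b1 * b3))"
    by (simp add: algebra_simps)
  also have "\<dots> = 0" unfolding e1 e2 by (simp add: algebra_simps)
  finally show ?thesis by (simp add: add_eq_0_iff)
qed

lemma alg_desc:
  fixes a q v p u w N J :: "'a::comm_ring_1"
  assumes h: "- (v * (u * w)) = p * (u * w) + - a * q * v"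
  shows "(N * a + (J + 1) * u) * (N * w - q) * v + N * u * w * p + (J + 1) * u * q * v = (N * (N * a + J * u)) * (w * v)"
proof -
  have "a * q * v = p * (u * w) - (p * (u * w) + - a * q * v)" by (simp add: algebra_simps)
  also have "\<dots> = p * (u * w) - (- (v * (u * w)))" unfolding h[symmetric] by simp
  also have "\<dots> = p * u * w + v * u * w" by (simp add: algebra_simps)
  finally have aq: "a * q * v = p * u * w + v * u * w" .
  have "(N * a + (J + 1) * u) * (N * w - q) * v + N * u * w * p + (J + 1) * u * q * v
     = N * N * a * w * v - N * (a * q * v) + N * (J + 1) * u * w * v + N * u * w * p"
    by (simp add: algebra_simps)
  also have "\<dots> = (N * (N * a + J * u)) * (w * v)" unfolding aq by (simp add: algebra_simps)
  finally show ?thesis .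
qed

lemma rat_common:
  assumes "q1 \<in> \<rat>" "q2 \<in> \<rat>"
  obtains M1 M2 N :: int where "N > 0" "q1 = of_int M1 / of_int N" "q2 = of_int M2 / of_int N"
proof -
  obtain a1 b1 where 1: "b1 > 0" "q1 = of_int a1 / of_int b1" using assms(1) by (auto elim!: Rats_cases')
  obtain a2 b2 where 2: "b2 > 0" "q2 = of_int a2 / of_int b2" using assms(2) by (auto elim!: Rats_cases')
  have "q1 = of_int (a1 * b2) / of_int (b1 * b2)" using 1 2 by simp
  moreover have "q2 = of_int (a2 * b1) / of_int (b1 * b2)" using 1 2 by (simp add: mult.commute)
  moreover have "b1 * b2 > 0" using 1 2 by simp
  ultimately show ?thesis using that by blast
qed

lemma sum_ge_rat:
  fixes a b c :: real
  assumes "\<And>q1 q2. q1 \<in> \<rat> \<Longrightarrow> q2 \<in> \<rat> \<Longrightarrow> q1 < a \<Longrightarrow> q2 < b \<Longrightarrow> q1 + q2 \<le> c"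
  shows "a + b \<le> c"
proof (rule ccontr)
  assume "\<not> a + b \<le> c"
  then have d: "(a + b - c) / 2 > 0" by simp
  obtain q1 where q1: "q1 \<in> \<rat>" "a - (a + b - c) / 2 < q1" "q1 < a" using Rats_dense_in_real[of "a - (a + b - c) / 2" a] d by auto
  obtain q2 where q2: "q2 \<in> \<rat>" "b - (a + b - c) / 2 < q2" "q2 < b" using Rats_dense_in_real[of "b - (a + b - c) / 2" b] d by auto
  have "q1 + q2 \<le> c" using assms q1 q2 by blast
  then show False using q1(2,3) q2(2,3) by (smt (verit) field_sum_of_halves)
qed

lemma sum_le_rat:
  fixes a b c :: real
  assumes "\<And>q1 q2. q1 \<in> \<rat> \<Longrightarrow> q2 \<in> \<rat> \<Longrightarrow> a < q1 \<Longrightarrow> b < q2 \<Longrightarrow> c \<le> q1 + q2"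
  shows "c \<le> a + b"
proof (rule ccontr)
  assume "\<not> c \<le> a + b"
  then have d: "(c - a - b) / 2 > 0" by simp
  obtain q1 where q1: "q1 \<in> \<rat>" "a < q1" "q1 < a + (c - a - b) / 2" using Rats_dense_in_real[of a "a + (c - a - b) / 2"] d by auto
  obtain q2 where q2: "q2 \<in> \<rat>" "b < q2" "q2 < b + (c - a - b) / 2" using Rats_dense_in_real[of b "b + (c - a - b) / 2"] d by auto
  have "c \<le> q1 + q2" using assms q1 q2 by blast
  then show False using q1(2,3) q2(2,3) by (smt (verit) field_sum_of_halves)
qed

lemma prod_ge_rat:
  fixes a b c :: real
  assumes "a \<ge> 0" "b \<ge> 0" "c \<ge> 0"
    and h: "\<And>q1 q2. q1 \<in> \<rat> \<Longrightarrow> q2 \<in> \<rat> \<Longrightarrow> 0 \<le> q1 \<Longrightarrow> q1 < a \<Longrightarrow> 0 \<le> q2 \<Longrightarrow> q2 < b \<Longrightarrow> q1 * q2 \<le> c"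
  shows "a * b \<le> c"
proof (rule ccontr)
  assume n: "\<not> a * b \<le> c"
  then have b0: "b > 0" using assms by (metis less_eq_real_def mult_zero_right)
  have "c / b < a" using n b0 by (simp add: divide_less_eq mult.commute)
  then obtain q1 where q1: "q1 \<in> \<rat>" "c / b < q1" "q1 < a" using Rats_dense_in_real by blast
  have cb: "c / b \<ge> 0" using assms b0 by simp
  have q1p: "q1 > 0" using q1 cb by linarith
  have "c / q1 < b" using q1(2) q1p b0 by (simp add: divide_less_eq mult.commute)
  then obtain q2 where q2: "q2 \<in> \<rat>" "c / q1 < q2" "q2 < b" using Rats_dense_in_real by blast
  have q2p: "q2 > 0" using q2 assms(3) q1p by (smt (verit) divide_nonneg_pos)
  have "q1 * q2 \<le> c" using h q1 q2 q1p q2p by simp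
  moreover have "c < q1 * q2" using q2(2) q1p by (simp add: divide_less_eq mult.commute)
  ultimately show False by simp
qed

lemma prod_le_rat:
  fixes a b c :: real
  assumes "a \<ge> 0" "b \<ge> 0"
    and h: "\<And>q1 q2. q1 \<in> \<rat> \<Longrightarrow> q2 \<in> \<rat> \<Longrightarrow> a < q1 \<Longrightarrow> b < q2 \<Longrightarrow> c \<le> q1 * q2"
  shows "c \<le> a * b"
proof (rule ccontr)
  assume n: "\<not> c \<le> a * b"
  define t where "t = (if b = 0 then a + 1 else c / b)"
  have at: "a < t" unfolding t_def using n assms by (auto simp: less_divide_eq mult.commute)
  then obtain q1 where q1: "q1 \<in> \<rat>" "a < q1" "q1 < t" using Rats_dense_in_real by blast
  have q1p: "q1 > 0" using q1 assms by linarith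
  have "q1 * b < c"
  proof (cases "b = 0")
    case True then show ?thesis using n assms by simp
  next
    case False
    then have "q1 < c / b" using q1 unfolding t_def by simp
    then show ?thesis using False assms by (simp add: less_divide_eq)
  qed
  then have "b < c / q1" using q1p by (simp add: less_divide_eq mult.commute)
  then obtain q2 where q2: "q2 \<in> \<rat>" "b < q2" "q2 < c / q1" using Rats_dense_in_real by blast
  have "c \<le> q1 * q2" using h q1 q2 by blast
  moreover have "q1 * q2 < c" using q2(3) q1p by (simp add: less_divide_eq mult.commute)
  ultimately show False by simp
qed

lemma dense_Int:
  assumes "openin X A" "X closure_of A = topspace X" "openin X B" "X closure_of B = topspace X"
  shows "X closure_of (A \<inter> B) = topspace X"
  unfolding dense_intersects_open
proof (intro allI impI)
  fix T assume T: "openin X T \<and> T \<noteq> {}"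
  then have "A \<inter> T \<noteq> {}" using assms(2) unfolding dense_intersects_open by blast
  moreover have "openin X (A \<inter> T)" using assms(1) T by blast
  ultimately have "B \<inter> (A \<inter> T) \<noteq> {}" using assms(4) unfolding dense_intersects_open by blast
  then show "A \<inter> B \<inter> T \<noteq> {}" by blast
qed

lemma dense_meets: "X closure_of W = topspace X \<Longrightarrow> openin X Op \<Longrightarrow> x \<in> Op \<Longrightarrow> \<exists>y\<in>W. y \<in> Op"
  unfolding dense_intersects_open by blast

lemma openin_sub_open: "openin X V \<Longrightarrow> openin (subtopology X V) A \<Longrightarrow> openin X A"
  using openin_trans_full by blast

lemma cont_preimage_open:
  assumes "continuous_map (subtopology X V) euclideanreal g" "openin X V" "open S"
  shows "openin X {x \<in> topspace X \<inter> V. g x \<in> S}"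
proof -
  have S: "openin euclideanreal S" using assms(3) open_openin by blast
  have "openin (subtopology X V) {x \<in> topspace (subtopology X V). g x \<in> S}"
    using openin_continuous_map_preimage[OF assms(1) S] .
  then show ?thesis using openin_sub_open[OF assms(2)] by simp
qed

lemma cont_agree_dense:
  assumes V: "openin X V" and g1: "continuous_map (subtopology X V) euclideanreal g1"
    and g2: "continuous_map (subtopology X V) euclideanreal g2"
    and W: "X closure_of W = topspace X" and agree: "\<And>x. x \<in> W \<Longrightarrow> x \<in> V \<Longrightarrow> g1 x = g2 x"
    and x: "x \<in> V"
  shows "g1 x = g2 x"
proof (rule ccontr)
  assume ne: "g1 x \<noteq> g2 x"
  have "continuous_map (subtopology X V) euclideanreal (\<lambda>y. g1 y - g2 y)"
    using g1 g2 by (rule continuous_map_diff)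
  then have Op: "openin X {y \<in> topspace X \<inter> V. g1 y - g2 y \<in> - {0}}"
    using cont_preimage_open V by (metis open_Compl closed_singleton)
  have xt: "x \<in> topspace X" using V x openin_subset by blast
  have "x \<in> {y \<in> topspace X \<inter> V. g1 y - g2 y \<in> - {0}}" using xt x ne by simp
  then obtain y where y: "y \<in> W" "y \<in> {y \<in> topspace X \<inter> V. g1 y - g2 y \<in> - {0}}" using dense_meets[OF W Op] by blast
  then have "y \<in> V" "g1 y \<noteq> g2 y" by auto
  then show False using agree[OF y(1)] by simp
qed

lemma ae_eq_agree:
  assumes r1: "ae_rep X V1 g1" and r2: "ae_rep X V2 g2"
    and e1: "ae_eq X (V1, g1) p" and e2: "ae_eq X (V2, g2) p" and x: "x \<in> V1 \<inter> V2"
  shows "g1 x = g2 x"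
proof -
  obtain W1 where W1: "openin X W1" "X closure_of W1 = topspace X" "W1 \<subseteq> V1 \<inter> fst p" "\<forall>x\<in>W1. g1 x = snd p x"
    using e1 unfolding ae_eq_def by auto
  obtain W2 where W2: "openin X W2" "X closure_of W2 = topspace X" "W2 \<subseteq> V2 \<inter> fst p" "\<forall>x\<in>W2. g2 x = snd p x"
    using e2 unfolding ae_eq_def by auto
  have V: "openin X (V1 \<inter> V2)" using r1 r2 unfolding ae_rep_def by blast
  have c1: "continuous_map (subtopology X (V1 \<inter> V2)) euclideanreal g1"
    using r1 unfolding ae_rep_def by (meson continuous_map_from_subtopology_mono inf_le1)
  have c2: "continuous_map (subtopology X (V1 \<inter> V2)) euclideanreal g2"
    using r2 unfolding ae_rep_def by (meson continuous_map_from_subtopology_mono inf_le2)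
  show ?thesis
    by (rule cont_agree_dense[OF V c1 c2 dense_Int[OF W1(1,2) W2(1,2)] _ x]) (use W1 W2 in auto)
qed

lemma ae_max_props:
  assumes rep: "ae_rep X U f"
  shows "ae_rep X (fst (ae_max X (U, f))) (snd (ae_max X (U, f)))"
    "ae_eq X (ae_max X (U, f)) (U, f)"
    "\<And>V g. ae_rep X V g \<Longrightarrow> ae_eq X (V, g) (U, f) \<Longrightarrow> V \<subseteq> fst (ae_max X (U, f)) \<and> (\<forall>x\<in>V. snd (ae_max X (U, f)) x = g x)"
proof -
  let ?p = "(U, f)"
  define C where "C = {(V, g). ae_rep X V g \<and> ae_eq X (V, g) ?p}"
  define Vs where "Vs = \<Union>{V. \<exists>g. (V, g) \<in> C}"
  define gs where "gs = (\<lambda>x. if x \<in> Vs then (SOME y. \<exists>V g. (V, g) \<in> C \<and> x \<in> V \<and> y = g x) else 0)"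
  have Cag: "g x = g' x" if "(V, g) \<in> C" "(V', g') \<in> C" "x \<in> V" "x \<in> V'" for V g V' g' x
    using ae_eq_agree[of X V g V' g' ?p x] that unfolding C_def by auto
  have gsV: "gs x = g x" if "(V, g) \<in> C" "x \<in> V" for V g x
  proof -
    have xV: "x \<in> Vs" unfolding Vs_def using that by blast
    have "\<exists>y. \<exists>V g. (V, g) \<in> C \<and> x \<in> V \<and> y = g x" using that by blast
    then have "\<exists>V' g'. (V', g') \<in> C \<and> x \<in> V' \<and> (SOME y. \<exists>V g. (V, g) \<in> C \<and> x \<in> V \<and> y = g x) = g' x"
      by (rule someI_ex)
    then obtain V' g' where vg: "(V', g') \<in> C" "x \<in> V'" "(SOME y. \<exists>V g. (V, g) \<in> C \<and> x \<in> V \<and> y = g x) = g' x"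
      by blast
    have "gs x = g' x" unfolding gs_def using xV vg(3) by simp
    also have "\<dots> = g x" using Cag[OF vg(1) that(1) vg(2) that(2)] .
    finally show ?thesis .
  qed
  have pC: "?p \<in> C"
  proof -
    have "ae_eq X ?p ?p" using rep unfolding ae_eq_def ae_rep_def by auto
    then show ?thesis unfolding C_def using rep by simp
  qed
  have UVs: "U \<subseteq> Vs" unfolding Vs_def using pC by blast
  have openVs: "openin X Vs" unfolding Vs_def C_def ae_rep_def by auto
  have VsX: "Vs \<subseteq> topspace X" using openVs openin_subset by blast
  have denseVs: "X closure_of Vs = topspace X"
  proof -
    have "X closure_of U \<subseteq> X closure_of Vs" using UVs closure_of_mono by blast
    moreover have "X closure_of U = topspace X" using rep unfolding ae_rep_def by blast
    moreover have "X closure_of Vs \<subseteq> topspace X" by (rule closure_of_subset_topspace)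
    ultimately show ?thesis by blast
  qed
  have contVs: "continuous_map (subtopology X Vs) euclideanreal gs"
    unfolding continuous_map_def
  proof (intro conjI allI impI)
    show "gs \<in> topspace (subtopology X Vs) \<rightarrow> topspace euclideanreal" by simp
    fix S :: "real set" assume "openin euclideanreal S"
    then have S: "open S" using open_openin by blast
    have eq: "{x \<in> topspace (subtopology X Vs). gs x \<in> S} = \<Union>{{x \<in> topspace X \<inter> V. g x \<in> S} | V g. (V, g) \<in> C}"
    proof (rule set_eqI, rule iffI)
      fix x assume "x \<in> {x \<in> topspace (subtopology X Vs). gs x \<in> S}"
      then have x: "x \<in> topspace X" "x \<in> Vs" "gs x \<in> S" by auto
      then obtain V g where Vg: "(V, g) \<in> C" "x \<in> V" unfolding Vs_def by blast
      then have "gs x = g x" by (rule gsV)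
      then have "x \<in> {x \<in> topspace X \<inter> V. g x \<in> S}" using x Vg by simp
      then show "x \<in> \<Union>{{x \<in> topspace X \<inter> V. g x \<in> S} | V g. (V, g) \<in> C}" using Vg(1) by blast
    next
      fix x assume "x \<in> \<Union>{{x \<in> topspace X \<inter> V. g x \<in> S} | V g. (V, g) \<in> C}"
      then obtain V g where "(V, g) \<in> C" "x \<in> topspace X" "x \<in> V" "g x \<in> S" by blast
      moreover then have "x \<in> Vs" unfolding Vs_def by blast
      ultimately show "x \<in> {x \<in> topspace (subtopology X Vs). gs x \<in> S}" using gsV by auto
    qed
    have "openin X (\<Union>{{x \<in> topspace X \<inter> V. g x \<in> S} | V g. (V, g) \<in> C})"
    proof (rule openin_Union)
      fix A assume "A \<in> {{x \<in> topspace X \<inter> V. g x \<in> S} | V g. (V, g) \<in> C}"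
      then obtain V g where A: "A = {x \<in> topspace X \<inter> V. g x \<in> S}" "(V, g) \<in> C" by blast
      then have "ae_rep X V g" unfolding C_def by blast
      then show "openin X A" unfolding A(1) using cont_preimage_open S unfolding ae_rep_def by blast
    qed
    then have "openin X {x \<in> topspace (subtopology X Vs). gs x \<in> S}" using eq by simp
    moreover have "{x \<in> topspace (subtopology X Vs). gs x \<in> S} \<subseteq> Vs" by auto
    ultimately show "openin (subtopology X Vs) {x \<in> topspace (subtopology X Vs). gs x \<in> S}"
      unfolding openin_subtopology by blast
  qed
  have zeroVs: "\<forall>x. x \<notin> Vs \<longrightarrow> gs x = 0" unfolding gs_def by simp
  have repm: "ae_rep X Vs gs" unfolding ae_rep_def using openVs denseVs contVs zeroVs by blast
  have eqm: "ae_eq X (Vs, gs) ?p"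
    unfolding ae_eq_def using rep UVs gsV[OF pC] unfolding ae_rep_def by auto
  have maxm: "\<forall>V g. ae_rep X V g \<and> ae_eq X (V, g) ?p \<longrightarrow> V \<subseteq> Vs \<and> (\<forall>x\<in>V. gs x = g x)"
    unfolding Vs_def using gsV unfolding C_def by blast
  let ?Q = "\<lambda>m. ae_rep X (fst m) (snd m) \<and> ae_eq X m ?p \<and>
      (\<forall>V g. ae_rep X V g \<and> ae_eq X (V, g) ?p \<longrightarrow> V \<subseteq> fst m \<and> (\<forall>x\<in>V. snd m x = g x))"
  have Qm: "?Q (Vs, gs)" using repm eqm maxm by simp
  have uniq: "m = (Vs, gs)" if "?Q m" for m
  proof -
    have m1: "ae_rep X (fst m) (snd m)" "ae_eq X (fst m, snd m) ?p" using that by auto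
    have "fst m \<subseteq> Vs \<and> (\<forall>x\<in>fst m. gs x = snd m x)" using maxm m1 by blast
    moreover have "Vs \<subseteq> fst m \<and> (\<forall>x\<in>Vs. snd m x = gs x)" using that repm eqm by blast
    ultimately have "fst m = Vs" "\<forall>x\<in>Vs. snd m x = gs x" by auto
    moreover have "\<forall>x. x \<notin> fst m \<longrightarrow> snd m x = 0" using m1 unfolding ae_rep_def by blast
    ultimately have "snd m = gs" using zeroVs by (intro ext) metis
    then show ?thesis using \<open>fst m = Vs\<close> by (simp add: prod_eq_iff)
  qed
  have "ae_max X ?p = (Vs, gs)" unfolding ae_max_def using Qm uniq by (rule the_equality)
  then show "ae_rep X (fst (ae_max X (U, f))) (snd (ae_max X (U, f)))"
    "ae_eq X (ae_max X (U, f)) (U, f)"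
    "\<And>V g. ae_rep X V g \<Longrightarrow> ae_eq X (V, g) (U, f) \<Longrightarrow> V \<subseteq> fst (ae_max X (U, f)) \<and> (\<forall>x\<in>V. snd (ae_max X (U, f)) x = g x)"
    using Qm by auto
qed

locale POR =
  fixes le :: "'a::comm_ring_1 \<Rightarrow> 'a \<Rightarrow> bool"
  assumes po: "po_ring le" and arch: "archimedean_po le" and lcz: "localizable le"
begin

abbreviation P where "P x \<equiv> le 0 x"

lemma le_refl: "le x x" using po unfolding po_ring_def by blast
lemma le_antisym: "le x y \<Longrightarrow> le y x \<Longrightarrow> x = y" using po unfolding po_ring_def by blast
lemma le_trans: "le x y \<Longrightarrow> le y z \<Longrightarrow> le x z" using po unfolding po_ring_def by blast
lemma le_add: "le x y \<Longrightarrow> le (x + t) (y + t)" using po unfolding po_ring_def by blast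
lemma P_mult: "P a \<Longrightarrow> P b \<Longrightarrow> P (a * b)" using po unfolding po_ring_def by blast
lemma P_sq: "P (a * a)" using po unfolding po_ring_def by blast

lemma le_iff: "le x y \<longleftrightarrow> P (y - x)"
proof
  assume "le x y" then have "le (x + - x) (y + - x)" by (rule le_add)
  then show "P (y - x)" by simp
next
  assume "P (y - x)" then have "le (0 + x) (y - x + x)" by (rule le_add)
  then show "le x y" by simp
qed

lemma P_add: "P a \<Longrightarrow> P b \<Longrightarrow> P (a + b)"
proof -
  assume a: "P a" and b: "P b"
  have "le (0 + a) (b + a)" using le_add[OF b] .
  then have "le a (a + b)" by (simp add: add.commute)
  then show ?thesis using le_trans[OF a] by blast
qed

lemma P_0: "P 0" by (rule le_refl)
lemma P_1: "P 1" using P_sq[of 1] by simp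
lemma P_nat: "P (of_nat n)"
  by (induction n) (auto simp: P_0 intro!: P_add P_1)
lemma P_antisym: "P a \<Longrightarrow> P (- a) \<Longrightarrow> a = 0"
  using le_antisym[of 0 a] le_iff[of a 0] by simp

lemma P_sum: "finite S \<Longrightarrow> (\<And>i. i \<in> S \<Longrightarrow> P (f i)) \<Longrightarrow> P (sum f S)"
  by (induction S rule: finite_induct) (auto intro: P_add P_0)

lemma Loc_iff: "s \<in> Loc le \<longleftrightarrow> P (s - 1) \<and> (\<forall>r. P (r * s) \<longrightarrow> P r)"
  unfolding Loc_def by simp

lemma Loc_P: "s \<in> Loc le \<Longrightarrow> P s"
  using P_add[of "s - 1" 1] P_1 by (simp add: Loc_iff)
lemma Loc_ge1: "s \<in> Loc le \<Longrightarrow> P (s - 1)" by (simp add: Loc_iff)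
lemma Loc_cancel: "s \<in> Loc le \<Longrightarrow> P (r * s) \<Longrightarrow> P r" by (simp add: Loc_iff)
lemma Loc_1: "1 \<in> Loc le" by (simp add: Loc_iff P_0)
lemma Loc_mult: "s \<in> Loc le \<Longrightarrow> t \<in> Loc le \<Longrightarrow> s * t \<in> Loc le"
proof -
  assume s: "s \<in> Loc le" and t: "t \<in> Loc le"
  have "s * t - 1 = (s - 1) * (t - 1) + (s - 1) + (t - 1)" by (simp add: algebra_simps)
  then have 1: "P (s * t - 1)" using s t by (metis P_add P_mult Loc_ge1)
  have 2: "P r" if "P (r * (s * t))" for r
    using that s t Loc_cancel by (metis mult.assoc)
  show ?thesis using 1 2 by (simp add: Loc_iff)
qed
lemma Loc_nzd: "s \<in> Loc le \<Longrightarrow> c * s = 0 \<Longrightarrow> c = 0"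
proof -
  assume s: "s \<in> Loc le" and c: "c * s = 0"
  have "P c" using Loc_cancel[OF s, of c] c P_0 by simp
  moreover have "P (- c)" using Loc_cancel[OF s, of "- c"] c P_0 by simp
  ultimately show ?thesis using P_antisym by blast
qed
lemma Loc_cancel_eq: "s \<in> Loc le \<Longrightarrow> a * s = b * s \<Longrightarrow> a = b"
  using Loc_nzd[of s "a - b"] by (simp add: algebra_simps)

lemma archI: "(\<And>k::nat. k \<ge> 1 \<Longrightarrow> P (of_nat k * g + h)) \<Longrightarrow> P g"
  using arch unfolding archimedean_po_def by blast

lemma lcz_bound: "\<exists>t\<in>Loc le. P (r + t) \<and> P (t - r)"
proof -
  obtain t where "t \<in> Loc le" "le (- t) r" "le r t" using lcz unfolding localizable_def by blast
  have "P (r + t)" using le_iff[of "- t" r] \<open>le (- t) r\<close> by simp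
  moreover have "P (t - r)" using le_iff[of r t] \<open>le r t\<close> by simp
  ultimately show ?thesis using \<open>t \<in> Loc le\<close> by blast
qed

lemma nat_cancel: assumes "N \<ge> 1" "P (of_nat N * c)" shows "P c"
proof -
  obtain t where t: "t \<in> Loc le" "P (c + t)" using lcz_bound by blast
  have tP: "P t" using Loc_P t by auto
  have "P (of_nat k * c + of_nat N * t)" for k :: nat
  proof -
    define q j where "q = k div N" and "j = k mod N"
    have k: "k = q * N + j" by (simp add: q_def j_def)
    have jN: "j < N" using assms(1) by (simp add: j_def)
    have "of_nat k * c + of_nat N * t = of_nat q * (of_nat N * c) + of_nat j * (c + t) + of_nat (N - j) * t"
    proof -
      have d: "(of_nat (N - j) :: 'a) = of_nat N - of_nat j" using jN by (simp add: of_nat_diff)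
      show ?thesis unfolding d k by (simp add: algebra_simps)
    qed
    also have "P \<dots>"
      by (intro P_add P_mult[OF P_nat] assms(2) t(2) tP)
    finally show ?thesis .
  qed
  then show ?thesis by (rule archI)
qed


lemma P_am: "P a \<Longrightarrow> P b \<Longrightarrow> P c \<Longrightarrow> P d \<Longrightarrow> P (a * b + c * d)"
  by (intro P_add P_mult)

lemma nat_cancel2: "P (2 * c) \<Longrightarrow> P c"
  using nat_cancel[of 2 c] by simp

abbreviation B where "B \<equiv> bdloc le"

lemma bd_iff: "(r, s) \<in> B \<longleftrightarrow> s \<in> Loc le \<and> (\<exists>n::nat. P (r + of_nat n * s) \<and> P (of_nat n * s - r))"
proof -
  have "\<And>n. le (- of_nat n * s) (r * 1) \<longleftrightarrow> P (r + of_nat n * s)"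
    by (subst le_iff) simp
  moreover have "\<And>n. le (r * 1) (of_nat n * s) \<longleftrightarrow> P (of_nat n * s - r)"
    by (subst le_iff) simp
  ultimately show ?thesis unfolding bdloc_def locfrac_def loc_le_def by simp
qed

lemma bdI: "s \<in> Loc le \<Longrightarrow> P (r + of_nat n * s) \<Longrightarrow> P (of_nat n * s - r) \<Longrightarrow> (r, s) \<in> B"
  using bd_iff by blast

lemma bdE: assumes "(r, s) \<in> B"
  obtains n :: nat where "s \<in> Loc le" "P (r + of_nat n * s)" "P (of_nat n * s - r)"
  using assms bd_iff by blast

lemma bd_Loc: "x \<in> B \<Longrightarrow> snd x \<in> Loc le"
  by (cases x) (auto elim: bdE)

lemma B_add: assumes "(r, s) \<in> B" "(r', s') \<in> B" shows "loc_add (r, s) (r', s') \<in> B"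
proof -
  obtain n where n: "s \<in> Loc le" "P (r + of_nat n * s)" "P (of_nat n * s - r)" using assms(1) by (rule bdE)
  obtain n' where n': "s' \<in> Loc le" "P (r' + of_nat n' * s')" "P (of_nat n' * s' - r')" using assms(2) by (rule bdE)
  have s: "P s" "P s'" using n n' Loc_P by auto
  have "P ((r + of_nat n * s) * s' + (r' + of_nat n' * s') * s)" using n n' s by (intro P_am)
  moreover have "(r + of_nat n * s) * s' + (r' + of_nat n' * s') * s = (r * s' + r' * s) + of_nat (n + n') * (s * s')"
    by (simp add: algebra_simps)
  moreover have "P ((of_nat n * s - r) * s' + (of_nat n' * s' - r') * s)" using n n' s by (intro P_am)
  moreover have "(of_nat n * s - r) * s' + (of_nat n' * s' - r') * s = of_nat (n + n') * (s * s') - (r * s' + r' * s)"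
    by (simp add: algebra_simps)
  ultimately show ?thesis unfolding loc_add_def using Loc_mult[OF n(1) n'(1)]
    by (auto intro!: bdI[where n = "n + n'"])
qed

lemma B_mult: assumes "(r, s) \<in> B" "(r', s') \<in> B" shows "loc_mult (r, s) (r', s') \<in> B"
proof -
  obtain n where n: "s \<in> Loc le" "P (r + of_nat n * s)" "P (of_nat n * s - r)" using assms(1) by (rule bdE)
  obtain n' where n': "s' \<in> Loc le" "P (r' + of_nat n' * s')" "P (of_nat n' * s' - r')" using assms(2) by (rule bdE)
  have "P ((r + of_nat n * s) * (r' + of_nat n' * s') + (of_nat n * s - r) * (of_nat n' * s' - r'))"
    using n n' by (intro P_am)
  moreover have "(r + of_nat n * s) * (r' + of_nat n' * s') + (of_nat n * s - r) * (of_nat n' * s' - r')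
     = 2 * (r * r' + of_nat (n * n') * (s * s'))"
    by (simp add: algebra_simps)
  moreover have "P ((r + of_nat n * s) * (of_nat n' * s' - r') + (of_nat n * s - r) * (r' + of_nat n' * s'))"
    using n n' by (intro P_am)
  moreover have "(r + of_nat n * s) * (of_nat n' * s' - r') + (of_nat n * s - r) * (r' + of_nat n' * s')
     = 2 * (of_nat (n * n') * (s * s') - r * r')"
    by (simp add: algebra_simps)
  ultimately have "P (r * r' + of_nat (n * n') * (s * s'))" "P (of_nat (n * n') * (s * s') - r * r')"
    using nat_cancel2 by auto
  then show ?thesis unfolding loc_mult_def using Loc_mult[OF n(1) n'(1)]
    by (auto intro!: bdI[where n = "n * n'"])
qed

lemma B_add': "x \<in> B \<Longrightarrow> y \<in> B \<Longrightarrow> loc_add x y \<in> B"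
  using B_add by (cases x, cases y) auto
lemma B_mult': "x \<in> B \<Longrightarrow> y \<in> B \<Longrightarrow> loc_mult x y \<in> B"
  using B_mult by (cases x, cases y) auto

lemma B_neg: assumes "(r, s) \<in> B" shows "(- r, s) \<in> B"
proof -
  obtain n where n: "s \<in> Loc le" "P (r + of_nat n * s)" "P (of_nat n * s - r)" using assms by (rule bdE)
  show ?thesis by (rule bdI[where n = n]) (use n in \<open>simp_all add: add.commute\<close>)
qed

lemma B_intc: assumes "s \<in> Loc le" shows "(of_int m * s, s) \<in> B"
proof -
  have sP: "P s" using assms Loc_P by auto
  have "P (of_int m * s + of_nat (nat \<bar>m\<bar>) * s)" "P (of_nat (nat \<bar>m\<bar>) * s - of_int m * s)"
  proof -
    have "of_int m * s + of_nat (nat \<bar>m\<bar>) * s = of_nat (nat (m + \<bar>m\<bar>)) * s"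
      by (simp add: algebra_simps)
    then show "P (of_int m * s + of_nat (nat \<bar>m\<bar>) * s)" using sP P_nat P_mult by metis
    have "of_nat (nat \<bar>m\<bar>) * s - of_int m * s = of_nat (nat (\<bar>m\<bar> - m)) * s"
      by (simp add: algebra_simps)
    then show "P (of_nat (nat \<bar>m\<bar>) * s - of_int m * s)" using sP P_nat P_mult by metis
  qed
  then show ?thesis using assms by (intro bdI)
qed

lemma B_lin: assumes "(r, s) \<in> B" shows "(of_int n * r - of_int m * s, s) \<in> B"
proof -
  have s: "s \<in> Loc le" using assms by (auto elim: bdE)
  have "loc_mult (of_int n, 1) (r, s) \<in> B" using B_mult assms B_intc[OF Loc_1, of n] by simp
  moreover have "(- (of_int m * s), s) \<in> B" using B_intc[OF s, of "-m"] by simp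
  ultimately have "loc_add (loc_mult (of_int n, 1) (r, s)) (- (of_int m * s), s) \<in> B"
    by (simp add: B_add' loc_mult_def)
  then have "((of_int n * r) * s + (- (of_int m * s)) * s, s * s) \<in> B"
    by (simp add: loc_mult_def loc_add_def)
  then obtain N where N: "P ((of_int n * r) * s + (- (of_int m * s)) * s + of_nat N * (s * s))"
    "P (of_nat N * (s * s) - ((of_int n * r) * s + (- (of_int m * s)) * s))" by (auto elim: bdE)
  show ?thesis
  proof (rule bdI[where n = N])
    show "s \<in> Loc le" by fact
    show "P (of_int n * r - of_int m * s + of_nat N * s)"
      using N(1) Loc_cancel[OF s] by (simp add: algebra_simps)
    show "P (of_nat N * s - (of_int n * r - of_int m * s))"
      using N(2) Loc_cancel[OF s] by (simp add: algebra_simps)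
  qed
qed

lemma B_scale: assumes "(r, s) \<in> B" "t \<in> Loc le" shows "(r * t, s * t) \<in> B"
proof -
  obtain n where n: "s \<in> Loc le" "P (r + of_nat n * s)" "P (of_nat n * s - r)" using assms(1) by (rule bdE)
  have tP: "P t" using assms(2) Loc_P by auto
  show ?thesis
  proof (rule bdI[where n = n])
    show "s * t \<in> Loc le" using n(1) assms(2) Loc_mult by auto
    have "P ((r + of_nat n * s) * t)" using n tP P_mult by auto
    then show "P (r * t + of_nat n * (s * t))" by (simp add: algebra_simps)
    have "P ((of_nat n * s - r) * t)" using n tP P_mult by auto
    then show "P (of_nat n * (s * t) - r * t)" by (simp add: algebra_simps)
  qed
qed

lemma B_one: "(1, 1) \<in> B" using B_intc[OF Loc_1, of 1] by simp
lemma B_Pos: assumes "s \<in> Loc le" "P r" "P (s - r)" shows "(r, s) \<in> B"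
  using assms by (intro bdI[where n = 1]) (auto intro: P_add Loc_P)

lemma loc_eq_trans: "loc_eq x y \<Longrightarrow> loc_eq y z \<Longrightarrow> snd y \<in> Loc le \<Longrightarrow> loc_eq x z"
  unfolding loc_eq_def
proof -
  assume 1: "fst x * snd y = fst y * snd x" and 2: "fst y * snd z = fst z * snd y" and y: "snd y \<in> Loc le"
  have "(fst x * snd z) * snd y = (fst z * snd x) * snd y"
    by (metis 1 2 mult.assoc mult.commute)
  then show "fst x * snd z = fst z * snd x" using Loc_cancel_eq[OF y] by blast
qed

lemma loc_eq_sym: "loc_eq x y \<Longrightarrow> loc_eq y x" unfolding loc_eq_def by simp
lemma loc_eq_refl: "loc_eq x x" unfolding loc_eq_def by simp

end

context POR begin

lemma B_same_add: assumes "(r, s) \<in> B" "(r', s) \<in> B" shows "(r + r', s) \<in> B"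
proof -
  obtain n where n: "s \<in> Loc le" "P (r + of_nat n * s)" "P (of_nat n * s - r)" using assms(1) by (rule bdE)
  obtain n' where n': "P (r' + of_nat n' * s)" "P (of_nat n' * s - r')" using assms(2) by (rule bdE)
  have "P ((r + of_nat n * s) + (r' + of_nat n' * s))" using n n' P_add by blast
  moreover have "P ((of_nat n * s - r) + (of_nat n' * s - r'))" using n n' P_add by blast
  ultimately show ?thesis using n(1) by (intro bdI[where n = "n + n'"]) (simp_all add: algebra_simps)
qed

lemma B_unscale: assumes "(r * t, s * t) \<in> B" "t \<in> Loc le" "s \<in> Loc le" shows "(r, s) \<in> B"
proof -
  obtain n where n: "P (r * t + of_nat n * (s * t))" "P (of_nat n * (s * t) - r * t)" using assms(1) by (rule bdE)
  show ?thesis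
  proof (rule bdI[where n = n])
    show "P (r + of_nat n * s)" using n(1) Loc_cancel[OF assms(2), of "r + of_nat n * s"] by (simp add: algebra_simps)
    show "P (of_nat n * s - r)" using n(2) Loc_cancel[OF assms(2), of "of_nat n * s - r"] by (simp add: algebra_simps)
  qed fact
qed

lemma K_eq: "\<psi> \<in> Kset le \<Longrightarrow> a \<in> B \<Longrightarrow> b \<in> B \<Longrightarrow> loc_eq a b \<Longrightarrow> \<psi> a = \<psi> b"
  unfolding Kset_def by blast
lemma K_add: "\<psi> \<in> Kset le \<Longrightarrow> a \<in> B \<Longrightarrow> b \<in> B \<Longrightarrow> \<psi> (loc_add a b) = \<psi> a + \<psi> b"
  unfolding Kset_def by blast
lemma K_mult: "\<psi> \<in> Kset le \<Longrightarrow> a \<in> B \<Longrightarrow> b \<in> B \<Longrightarrow> \<psi> (loc_mult a b) = \<psi> a * \<psi> b"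
  unfolding Kset_def by blast
lemma K_one: "\<psi> \<in> Kset le \<Longrightarrow> \<psi> (1, 1) = 1"
  unfolding Kset_def by blast
lemma K_out: "\<psi> \<in> Kset le \<Longrightarrow> a \<notin> B \<Longrightarrow> \<psi> a = 0"
  unfolding Kset_def by blast
lemma K_pos: assumes "\<psi> \<in> Kset le" "(r, s) \<in> B" "P r" shows "\<psi> (r, s) \<ge> 0"
proof -
  have "loc_le le (0, 1) (r, s)" unfolding loc_le_def using assms(3) by simp
  then show ?thesis using assms(1,2) unfolding Kset_def by blast
qed

lemma K_scale: assumes "\<psi> \<in> Kset le" "(r, s) \<in> B" "t \<in> Loc le" shows "\<psi> (r * t, s * t) = \<psi> (r, s)"
  using K_eq[OF assms(1) B_scale[OF assms(2,3)] assms(2)] by (simp add: loc_eq_def algebra_simps)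

lemma K_same_add: assumes "\<psi> \<in> Kset le" "(r, s) \<in> B" "(r', s) \<in> B"
  shows "\<psi> (r + r', s) = \<psi> (r, s) + \<psi> (r', s)"
proof -
  have s: "s \<in> Loc le" using assms(2) by (auto elim: bdE)
  have "\<psi> (loc_add (r, s) (r', s)) = \<psi> (r, s) + \<psi> (r', s)" using K_add assms by blast
  moreover have "loc_add (r, s) (r', s) = ((r + r') * s, s * s)" by (simp add: loc_add_def algebra_simps)
  moreover have "\<psi> ((r + r') * s, s * s) = \<psi> (r + r', s)"
    using K_scale[OF assms(1) B_same_add[OF assms(2,3)] s] .
  ultimately show ?thesis by simp
qed

lemma K_zero: assumes "\<psi> \<in> Kset le" "s \<in> Loc le" shows "\<psi> (0, s) = 0"
proof -
  have b: "(0, s) \<in> B" using B_intc[OF assms(2), of 0] by simp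
  show ?thesis using K_same_add[OF assms(1) b b] by simp
qed

lemma K_neg: assumes "\<psi> \<in> Kset le" "(r, s) \<in> B" shows "\<psi> (- r, s) = - \<psi> (r, s)"
proof -
  have s: "s \<in> Loc le" using assms(2) by (auto elim: bdE)
  show ?thesis using K_same_add[OF assms(1) assms(2) B_neg[OF assms(2)]] K_zero[OF assms(1) s] by simp
qed

lemma K_nat1: assumes "\<psi> \<in> Kset le" shows "\<psi> (of_nat n, 1) = of_nat n"
proof (induction n)
  case 0 then show ?case using K_zero[OF assms Loc_1] by simp
next
  case (Suc n)
  have "\<psi> (of_nat n + 1, 1) = \<psi> (of_nat n, 1) + \<psi> (1, 1)"
    using K_same_add[OF assms, of "of_nat n" 1 1] B_intc[OF Loc_1, of "of_nat n"] B_one by simp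
  then show ?case using Suc K_one[OF assms] by (simp add: add.commute)
qed

lemma K_int1: assumes "\<psi> \<in> Kset le" shows "\<psi> (of_int m, 1) = of_int m"
proof (cases "m \<ge> 0")
  case True
  then show ?thesis using K_nat1[OF assms, of "nat m"] by simp
next
  case False
  then have "\<psi> (- of_nat (nat (- m)), 1) = - of_nat (nat (- m))"
    using K_neg[OF assms, of "of_nat (nat (- m))" 1] K_nat1[OF assms, of "nat (- m)"] B_intc[OF Loc_1, of "int (nat (- m))"]
    by simp
  then show ?thesis using False by simp
qed

lemma K_int: assumes "\<psi> \<in> Kset le" "s \<in> Loc le" shows "\<psi> (of_int m * s, s) = of_int m"
  using K_scale[OF assms(1) B_intc[OF Loc_1, of m] assms(2)] K_int1[OF assms(1)] by simp

lemma K_smul: assumes "\<psi> \<in> Kset le" "(r, s) \<in> B" shows "\<psi> (of_int n * r, s) = of_int n * \<psi> (r, s)"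
proof -
  have "\<psi> (loc_mult (of_int n, 1) (r, s)) = \<psi> (of_int n, 1) * \<psi> (r, s)"
    using K_mult[OF assms(1) B_intc[OF Loc_1, of n] assms(2)] by simp
  then show ?thesis using K_int1[OF assms(1)] by (simp add: loc_mult_def)
qed

lemma K_lin: assumes "\<psi> \<in> Kset le" "(r, s) \<in> B"
  shows "\<psi> (of_int n * r - of_int m * s, s) = of_int n * \<psi> (r, s) - of_int m"
proof -
  have s: "s \<in> Loc le" using assms(2) by (auto elim: bdE)
  have b1: "(of_int n * r, s) \<in> B" using B_lin[OF assms(2), of n 0] by simp
  have b2: "(- (of_int m * s), s) \<in> B" using B_intc[OF s, of "- m"] by simp
  have "\<psi> (of_int n * r + - (of_int m * s), s) = \<psi> (of_int n * r, s) + \<psi> (- (of_int m * s), s)"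
    using K_same_add[OF assms(1) b1 b2] .
  then show ?thesis using K_smul[OF assms] K_int[OF assms(1) s, of "- m"] by simp
qed

lemma K_sq: assumes "\<psi> \<in> Kset le" "(r, s) \<in> B" shows "\<psi> (r * r, s * s) = (\<psi> (r, s))\<^sup>2"
  using K_mult[OF assms(1) assms(2) assms(2)] by (simp add: loc_mult_def power2_eq_square)

lemma K_den_nonneg: assumes "\<psi> \<in> Kset le" "s \<in> Loc le" shows "\<psi> (1, s) \<ge> 0"
proof -
  have "(1, s) \<in> B" using assms(2) Loc_ge1 P_1 by (intro B_Pos) auto
  then show ?thesis using K_pos[OF assms(1)] P_1 by blast
qed

lemma B_den: "s \<in> Loc le \<Longrightarrow> (1, s) \<in> B"
  using Loc_ge1 P_1 by (intro B_Pos) auto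

end

context POR begin

definition Apos where "Apos = {x \<in> B. P (fst x)}"

definition cone :: "('a \<times> 'a) set \<Rightarrow> bool" where
  "cone Q \<longleftrightarrow> Q \<subseteq> B \<and> Apos \<subseteq> Q \<and> (\<forall>x\<in>Q. \<forall>y\<in>Q. loc_add x y \<in> Q \<and> loc_mult x y \<in> Q)
     \<and> (\<forall>x\<in>Q. \<forall>y\<in>B. loc_eq x y \<longrightarrow> y \<in> Q)"

definition ext where "ext Q y = {w \<in> B. \<exists>m1\<in>Q. \<exists>m2\<in>Q. loc_eq w (loc_add m1 (loc_mult y m2))}"

lemma ext_mono: assumes "cone Q" "y \<in> B" shows "Q \<subseteq> ext Q y"
proof
  fix w assume w: "w \<in> Q"
  have z: "(0, 1) \<in> Q" using assms(1) B_intc[OF Loc_1, of 0] P_0 unfolding cone_def Apos_def by auto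
  have "w \<in> B" using w assms(1) unfolding cone_def by auto
  moreover have "loc_eq w (loc_add w (loc_mult y (0, 1)))"
    unfolding loc_eq_def loc_add_def loc_mult_def by (simp add: algebra_simps)
  ultimately show "w \<in> ext Q y" unfolding ext_def using w z by blast
qed

lemma ext_mem: assumes "cone Q" "y \<in> B" shows "y \<in> ext Q y"
proof -
  have z: "(0, 1) \<in> Q" "(1, 1) \<in> Q" using assms(1) B_intc[OF Loc_1, of 0] B_one P_0 P_1 unfolding cone_def Apos_def by auto
  have "loc_eq y (loc_add (0, 1) (loc_mult y (1, 1)))"
    unfolding loc_eq_def loc_add_def loc_mult_def by (simp add: algebra_simps)
  then show ?thesis unfolding ext_def using z assms(2) by blast
qed

lemma cone_ext: assumes Q: "cone Q" and y: "y \<in> B" shows "cone (ext Q y)"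
proof -
  have QB: "Q \<subseteq> B" and QA: "Apos \<subseteq> Q" and Qadd: "\<And>x z. x \<in> Q \<Longrightarrow> z \<in> Q \<Longrightarrow> loc_add x z \<in> Q"
    and Qmult: "\<And>x z. x \<in> Q \<Longrightarrow> z \<in> Q \<Longrightarrow> loc_mult x z \<in> Q"
    using Q unfolding cone_def by auto
  have "ext Q y \<subseteq> B" unfolding ext_def by auto
  moreover have "Apos \<subseteq> ext Q y" using ext_mono[OF Q y] QA by auto
  moreover have "loc_add w w' \<in> ext Q y" if w: "w \<in> ext Q y" and w': "w' \<in> ext Q y" for w w'
  proof -
    obtain m1 m2 where m: "m1 \<in> Q" "m2 \<in> Q" "loc_eq w (loc_add m1 (loc_mult y m2))" "w \<in> B"
      using w unfolding ext_def by blast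
    obtain m1' m2' where m': "m1' \<in> Q" "m2' \<in> Q" "loc_eq w' (loc_add m1' (loc_mult y m2'))" "w' \<in> B"
      using w' unfolding ext_def by blast
    have "loc_eq (loc_add w w') (loc_add (loc_add m1 m1') (loc_mult y (loc_add m2 m2')))"
    proof -
      obtain a b a' b' a1 b1 a2 b2 a1' b1' a2' b2' c d where
        e: "w = (a, b)" "w' = (a', b')" "m1 = (a1, b1)" "m2 = (a2, b2)" "m1' = (a1', b1')" "m2' = (a2', b2')" "y = (c, d)"
        by (metis surj_pair)
      show ?thesis using m(3) m'(3) unfolding e loc_eq_def loc_add_def loc_mult_def fst_conv snd_conv
        by (rule alg_add)
    qed
    moreover have "loc_add w w' \<in> B" using B_add' m(4) m'(4) by blast
    ultimately show ?thesis unfolding ext_def using Qadd m m' by blast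
  qed
  moreover have "loc_mult w w' \<in> ext Q y" if w: "w \<in> ext Q y" and w': "w' \<in> ext Q y" for w w'
  proof -
    obtain m1 m2 where m: "m1 \<in> Q" "m2 \<in> Q" "loc_eq w (loc_add m1 (loc_mult y m2))" "w \<in> B"
      using w unfolding ext_def by blast
    obtain m1' m2' where m': "m1' \<in> Q" "m2' \<in> Q" "loc_eq w' (loc_add m1' (loc_mult y m2'))" "w' \<in> B"
      using w' unfolding ext_def by blast
    have yy: "loc_mult y y \<in> Q"
    proof -
      have "loc_mult y y \<in> B" using B_mult' y by blast
      moreover have "P (fst (loc_mult y y))" by (simp add: loc_mult_def P_sq)
      ultimately show ?thesis using QA unfolding Apos_def by blast
    qed
    define M1 where "M1 = loc_add (loc_mult m1 m1') (loc_mult (loc_mult y y) (loc_mult m2 m2'))"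
    define M2 where "M2 = loc_add (loc_mult m1 m2') (loc_mult m2 m1')"
    have M: "M1 \<in> Q" "M2 \<in> Q" unfolding M1_def M2_def using m m' yy Qadd Qmult by auto
    have "loc_eq (loc_mult w w') (loc_add M1 (loc_mult y M2))"
    proof -
      obtain a b a' b' a1 b1 a2 b2 a1' b1' a2' b2' c d where
        e: "w = (a, b)" "w' = (a', b')" "m1 = (a1, b1)" "m2 = (a2, b2)" "m1' = (a1', b1')" "m2' = (a2', b2')" "y = (c, d)"
        by (metis surj_pair)
      show ?thesis using m(3) m'(3) unfolding M1_def M2_def e loc_eq_def loc_add_def loc_mult_def fst_conv snd_conv
        by (rule alg_mult)
    qed
    moreover have "loc_mult w w' \<in> B" using B_mult' m(4) m'(4) by blast
    ultimately show ?thesis unfolding ext_def using M by blast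
  qed
  moreover have "v \<in> ext Q y" if w: "w \<in> ext Q y" and v: "v \<in> B" "loc_eq w v" for w v
  proof -
    obtain m1 m2 where m: "m1 \<in> Q" "m2 \<in> Q" "loc_eq w (loc_add m1 (loc_mult y m2))" "w \<in> B"
      using w unfolding ext_def by blast
    have "loc_eq v (loc_add m1 (loc_mult y m2))"
      using loc_eq_trans[OF loc_eq_sym[OF v(2)] m(3)] bd_Loc[OF m(4)] by blast
    then show ?thesis unfolding ext_def using m v by blast
  qed
  ultimately show ?thesis unfolding cone_def by blast
qed

end

context POR begin

lemma cone_Apos: "cone Apos"
proof -
  have "loc_add x y \<in> Apos" if "x \<in> Apos" "y \<in> Apos" for x y
  proof -
    obtain r s r' s' where e: "x = (r, s)" "y = (r', s')" by (metis surj_pair)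
    have b: "(r, s) \<in> B" "(r', s') \<in> B" "P r" "P r'" using that unfolding e Apos_def by auto
    have "P s" "P s'" using b(1,2) by (auto elim!: bdE intro: Loc_P)
    then have "P (r * s' + r' * s)" using b by (intro P_am)
    then show ?thesis using B_add[OF b(1,2)] unfolding e Apos_def loc_add_def by simp
  qed
  moreover have "loc_mult x y \<in> Apos" if "x \<in> Apos" "y \<in> Apos" for x y
  proof -
    obtain r s r' s' where e: "x = (r, s)" "y = (r', s')" by (metis surj_pair)
    have b: "(r, s) \<in> B" "(r', s') \<in> B" "P r" "P r'" using that unfolding e Apos_def by auto
    then show ?thesis using B_mult[OF b(1,2)] P_mult unfolding e Apos_def loc_mult_def by simp
  qed
  moreover have "y \<in> Apos" if "x \<in> Apos" "y \<in> B" "loc_eq x y" for x y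
  proof -
    obtain r s r' s' where e: "x = (r, s)" "y = (r', s')" by (metis surj_pair)
    have b: "(r, s) \<in> B" "(r', s') \<in> B" "P r" "r * s' = r' * s" using that unfolding e Apos_def loc_eq_def by auto
    have "s \<in> Loc le" "s' \<in> Loc le" using b by (auto elim: bdE)
    then have "P (r * s')" using b P_mult Loc_P by blast
    then have "P r'" using b(4) Loc_cancel[OF \<open>s \<in> Loc le\<close>] by simp
    then show ?thesis using that unfolding e Apos_def by simp
  qed
  ultimately show ?thesis unfolding cone_def Apos_def by blast
qed

definition negp :: "'a \<times> 'a \<Rightarrow> 'a \<times> 'a" where "negp x = (- fst x, snd x)"

lemma negp_B: "x \<in> B \<Longrightarrow> negp x \<in> B"
  unfolding negp_def using B_neg by (cases x) auto

lemma mone_B: "(-1, 1) \<in> B" using B_intc[OF Loc_1, of "-1"] by simp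

lemma tot_contra: assumes Q: "cone Q" and y: "y \<in> B"
  and h1: "(-1, 1) \<in> ext Q y" and h2: "(-1, 1) \<in> ext Q (negp y)"
  shows "(-1, 1) \<in> Q"
proof -
  have Qadd: "\<And>x z. x \<in> Q \<Longrightarrow> z \<in> Q \<Longrightarrow> loc_add x z \<in> Q"
    and Qmult: "\<And>x z. x \<in> Q \<Longrightarrow> z \<in> Q \<Longrightarrow> loc_mult x z \<in> Q"
    and QA: "Apos \<subseteq> Q" and Qeq: "\<And>x z. x \<in> Q \<Longrightarrow> z \<in> B \<Longrightarrow> loc_eq x z \<Longrightarrow> z \<in> Q"
    using Q unfolding cone_def by auto
  obtain m1 m2 where m: "m1 \<in> Q" "m2 \<in> Q" "loc_eq (-1, 1) (loc_add m1 (loc_mult y m2))"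
    using h1 unfolding ext_def by blast
  obtain m3 m4 where m': "m3 \<in> Q" "m4 \<in> Q" "loc_eq (-1, 1) (loc_add m3 (loc_mult (negp y) m4))"
    using h2 unfolding ext_def by blast
  have yy: "loc_mult y y \<in> Q"
  proof -
    have "loc_mult y y \<in> B" using B_mult' y by blast
    moreover have "P (fst (loc_mult y y))" by (simp add: loc_mult_def P_sq)
    ultimately show ?thesis using QA unfolding Apos_def by blast
  qed
  define E where "E = loc_add (loc_add (loc_add m1 m3) (loc_mult m1 m3)) (loc_mult (loc_mult y y) (loc_mult m2 m4))"
  have EQ: "E \<in> Q" unfolding E_def using m m' yy Qadd Qmult by auto
  have "loc_eq E (-1, 1)"
  proof -
    obtain a1 b1 a2 b2 a3 b3 a4 b4 c d where
      e: "m1 = (a1, b1)" "m2 = (a2, b2)" "m3 = (a3, b3)" "m4 = (a4, b4)" "y = (c, d)"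
      by (metis surj_pair)
    have h1': "- (b1 * (d * b2)) = a1 * (d * b2) + c * a2 * b1"
      using m(3) unfolding e loc_eq_def loc_add_def loc_mult_def fst_conv snd_conv by simp
    have h2': "- (b3 * (d * b4)) = a3 * (d * b4) + - c * a4 * b3"
      using m'(3) unfolding e negp_def loc_eq_def loc_add_def loc_mult_def fst_conv snd_conv by simp
    show ?thesis using alg_tot[OF h1' h2'] unfolding E_def e loc_eq_def loc_add_def loc_mult_def fst_conv snd_conv
      by simp
  qed
  then show ?thesis using Qeq[OF EQ mone_B] by blast
qed

lemma descent:
  assumes e: "(- a, u) \<in> B" and na: "\<not> P a" and h: "(-1, 1) \<in> ext Apos (- a, u)"
  shows False
proof -
  obtain t1 t2 where t: "t1 \<in> Apos" "t2 \<in> Apos" "loc_eq (-1, 1) (loc_add t1 (loc_mult (- a, u) t2))"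
    using h unfolding ext_def by blast
  obtain p v q w where pe: "t1 = (p, v)" "t2 = (q, w)" by (metis surj_pair)
  have tb: "(p, v) \<in> B" "(q, w) \<in> B" "P p" "P q" using t(1,2) unfolding pe Apos_def by auto
  have hh: "- (v * (u * w)) = p * (u * w) + - a * q * v"
    using t(3) unfolding pe loc_eq_def loc_add_def loc_mult_def fst_conv snd_conv by simp
  have u: "u \<in> Loc le" using e by (auto elim: bdE)
  obtain K where K: "P (- a + of_nat K * u)" "P (of_nat K * u - - a)" using e by (auto elim: bdE)
  obtain N0 where N0: "v \<in> Loc le" "w \<in> Loc le" "P (of_nat N0 * w - q)" using tb by (auto elim!: bdE)
  define N :: nat where "N = N0 + 1"
  have N1: "N \<ge> 1" unfolding N_def by simp
  have Nw: "P (of_nat N * w - q)"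
  proof -
    have "of_nat N * w - q = (of_nat N0 * w - q) + w" unfolding N_def by (simp add: algebra_simps)
    then show ?thesis using N0 Loc_P P_add by metis
  qed
  have uP: "P u" "P v" "P w" using u N0 Loc_P by auto
  have wv: "w * v \<in> Loc le" using N0 Loc_mult by blast
  have step: "P (of_nat N * a + of_nat j * u)" if "P (of_nat N * a + of_nat (Suc j) * u)" for j
  proof -
    define J :: 'a where "J = of_nat j"
    have SJ: "of_nat (Suc j) = J + 1" unfolding J_def by simp
    have "P ((of_nat N * a + (J + 1) * u) * (of_nat N * w - q) * v + of_nat N * u * w * p + (J + 1) * u * q * v)"
    proof -
      have J1: "P (J + 1)" unfolding J_def using P_nat[of "Suc j"] by (simp add: add.commute)
      have "P ((of_nat N * a + (J + 1) * u) * (of_nat N * w - q) * v)"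
      proof -
        have "P (of_nat N * a + (J + 1) * u)" using that unfolding SJ .
        then show ?thesis using Nw uP P_mult by blast
      qed
      moreover have "P (of_nat N * u * w * p)" using P_mult P_nat uP tb(3) by metis
      moreover have "P ((J + 1) * u * q * v)" using P_mult J1 uP tb(4) by metis
      ultimately show ?thesis using P_add by metis
    qed
    then have "P ((of_nat N * (of_nat N * a + J * u)) * (w * v))" using alg_desc[OF hh] by metis
    then have "P (of_nat N * (of_nat N * a + J * u))" using Loc_cancel[OF wv] by blast
    then show ?thesis using nat_cancel[OF N1] unfolding J_def by blast
  qed
  have "P (of_nat N * a + of_nat j * u)" if "P (of_nat N * a + of_nat (j + m) * u)" for j m
    using that
  proof (induction m)
    case (Suc m)
    have "P (of_nat N * a + of_nat (Suc (j + m)) * u)" using Suc.prems by simp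
    then show ?case using step Suc.IH by blast
  qed simp
  moreover have "P (of_nat N * a + of_nat (0 + N * K) * u)"
  proof -
    have "P (of_nat N * (of_nat K * u - - a))" using K(2) P_mult P_nat by blast
    then show ?thesis by (simp add: algebra_simps)
  qed
  ultimately have "P (of_nat N * a)" by fastforce
  then have "P a" using nat_cancel[OF N1] by blast
  then show False using na by blast
qed

end

context POR begin

lemma exists_total_cone:
  assumes e: "(- a, u) \<in> B" and na: "\<not> P a"
  shows "\<exists>M. cone M \<and> (-1, 1) \<notin> M \<and> (- a, u) \<in> M \<and> (\<forall>y\<in>B. y \<in> M \<or> negp y \<in> M)"
proof -
  define F where "F = {Q. cone Q \<and> (-1, 1) \<notin> Q \<and> (- a, u) \<in> Q}"
  have T0: "ext Apos (- a, u) \<in> F"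
    unfolding F_def using cone_ext[OF cone_Apos e] descent[OF e na] ext_mem[OF cone_Apos e] by blast
  have "\<exists>M\<in>F. \<forall>X\<in>F. M \<subseteq> X \<longrightarrow> X = M"
  proof (rule subset_Zorn_nonempty)
    show "F \<noteq> {}" using T0 by blast
  next
    fix C assume C: "C \<noteq> {}" "subset.chain F C"
    have CF: "C \<subseteq> F" and ch: "\<And>X Y. X \<in> C \<Longrightarrow> Y \<in> C \<Longrightarrow> X \<subseteq> Y \<or> Y \<subseteq> X"
      using C(2) unfolding subset.chain_def by auto
    have cone: "\<And>X. X \<in> C \<Longrightarrow> cone X" and prp: "\<And>X. X \<in> C \<Longrightarrow> (-1, 1) \<notin> X"
      and em: "\<And>X. X \<in> C \<Longrightarrow> (- a, u) \<in> X" using CF unfolding F_def by auto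
    obtain X0 where X0: "X0 \<in> C" using C(1) by blast
    have "cone (\<Union>C)"
    proof -
      have "\<Union>C \<subseteq> B" using cone unfolding cone_def by blast
      moreover have "Apos \<subseteq> \<Union>C" using cone[OF X0] X0 unfolding cone_def by blast
      moreover have "loc_add x y \<in> \<Union>C \<and> loc_mult x y \<in> \<Union>C" if xy: "x \<in> \<Union>C" "y \<in> \<Union>C" for x y
      proof -
        obtain X Y where XY: "X \<in> C" "Y \<in> C" "x \<in> X" "y \<in> Y" using xy by blast
        show ?thesis
        proof (cases "X \<subseteq> Y")
          case True
          then show ?thesis using cone[OF XY(2)] XY unfolding cone_def by blast
        next
          case False
          then have "Y \<subseteq> X" using ch XY by blast
          then show ?thesis using cone[OF XY(1)] XY unfolding cone_def by blast
        qed
      qed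
      moreover have "z \<in> \<Union>C" if "x \<in> \<Union>C" "z \<in> B" "loc_eq x z" for x z
        using that cone unfolding cone_def by blast
      ultimately show ?thesis unfolding cone_def by blast
    qed
    moreover have "(-1, 1) \<notin> \<Union>C" using prp by blast
    moreover have "(- a, u) \<in> \<Union>C" using em X0 by blast
    ultimately show "\<Union>C \<in> F" unfolding F_def by blast
  qed
  then obtain M where M: "M \<in> F" and max: "\<And>X. X \<in> F \<Longrightarrow> M \<subseteq> X \<Longrightarrow> X = M" by blast
  have Mc: "cone M" "(-1, 1) \<notin> M" "(- a, u) \<in> M" using M unfolding F_def by auto
  have "y \<in> M \<or> negp y \<in> M" if y: "y \<in> B" for y
  proof (rule ccontr)
    assume nn: "\<not> (y \<in> M \<or> negp y \<in> M)"
    have "(-1, 1) \<in> ext M z" if z: "z \<in> B" "z \<notin> M" for z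
    proof (rule ccontr)
      assume "(-1, 1) \<notin> ext M z"
      moreover have "cone (ext M z)" using cone_ext[OF Mc(1) z(1)] .
      moreover have "M \<subseteq> ext M z" using ext_mono[OF Mc(1) z(1)] .
      ultimately have "ext M z \<in> F" using Mc(3) unfolding F_def by blast
      then have "ext M z = M" using max \<open>M \<subseteq> ext M z\<close> by blast
      then show False using ext_mem[OF Mc(1) z(1)] z(2) by blast
    qed
    then have "(-1, 1) \<in> ext M y" "(-1, 1) \<in> ext M (negp y)" using nn y negp_B by auto
    then have "(-1, 1) \<in> M" using tot_contra[OF Mc(1) y] by blast
    then show False using Mc(2) by blast
  qed
  then show ?thesis using Mc by blast
qed

end

context POR begin

lemma Apos_I: "x \<in> B \<Longrightarrow> P (fst x) \<Longrightarrow> x \<in> Apos" unfolding Apos_def by blast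

lemma P_int: "m \<ge> 0 \<Longrightarrow> P (of_int m)"
  using P_nat[of "nat m"] by simp

lemma B_lin2: assumes "(r, s) \<in> B" shows "(of_int m * s - of_int n * r, s) \<in> B"
proof -
  have "(of_int (- n) * r - of_int (- m) * s, s) \<in> B" using B_lin[OF assms] .
  moreover have "of_int (- n) * r - of_int (- m) * s = of_int m * s - of_int n * r" by (simp add: algebra_simps)
  ultimately show ?thesis by simp
qed

context
  fixes M
  assumes Mc: "cone M" and Mp: "(-1, 1) \<notin> M" and Mt: "\<forall>y\<in>B. y \<in> M \<or> negp y \<in> M"
begin

lemma MB: "M \<subseteq> B" using Mc unfolding cone_def by blast
lemma MA: "Apos \<subseteq> M" using Mc unfolding cone_def by blast
lemma Madd: "x \<in> M \<Longrightarrow> y \<in> M \<Longrightarrow> loc_add x y \<in> M" using Mc unfolding cone_def by blast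
lemma Mmult: "x \<in> M \<Longrightarrow> y \<in> M \<Longrightarrow> loc_mult x y \<in> M" using Mc unfolding cone_def by blast
lemma Meq: "x \<in> M \<Longrightarrow> y \<in> B \<Longrightarrow> loc_eq x y \<Longrightarrow> y \<in> M" using Mc unfolding cone_def by blast

lemma M_const: "m \<ge> 0 \<Longrightarrow> (of_int m, 1) \<in> M"
  using MA B_intc[OF Loc_1, of m] P_int unfolding Apos_def by auto

lemma M_int: assumes "(of_int c * s, s) \<in> M" shows "c \<ge> 0"
proof (rule ccontr)
  assume "\<not> c \<ge> 0"
  have s: "s \<in> Loc le" using assms MB by (auto elim: bdE)
  have "(of_int c, 1) \<in> M" using Meq[OF assms B_intc[OF Loc_1, of c]] by (simp add: loc_eq_def)
  moreover have "(of_int (- 1 - c), 1) \<in> M" using M_const[of "- 1 - c"] \<open>\<not> c \<ge> 0\<close> by simp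
  ultimately have "loc_add (of_int c, 1) (of_int (- 1 - c), 1) \<in> M" by (rule Madd)
  then show False using Mp by (simp add: loc_add_def)
qed

lemma Kcore:
  assumes n: "n > 0" "n' > 0" and x: "(r, s) \<in> B"
    and h1: "(of_int n * r - of_int m * s, s) \<in> M" and h2: "(of_int m' * s - of_int n' * r, s) \<in> M"
  shows "real_of_int m / real_of_int n \<le> real_of_int m' / real_of_int n'"
proof -
  have s: "s \<in> Loc le" using x by (auto elim: bdE)
  have "loc_add (loc_mult (of_int n', 1) (of_int n * r - of_int m * s, s)) (loc_mult (of_int n, 1) (of_int m' * s - of_int n' * r, s)) \<in> M"
    using M_const n h1 h2 by (intro Madd Mmult) auto
  moreover have "loc_eq (loc_add (loc_mult (of_int n', 1) (of_int n * r - of_int m * s, s)) (loc_mult (of_int n, 1) (of_int m' * s - of_int n' * r, s)))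
      (of_int (n * m' - n' * m) * s, s)"
    unfolding loc_eq_def loc_add_def loc_mult_def by (simp add: algebra_simps)
  ultimately have "(of_int (n * m' - n' * m) * s, s) \<in> M" using Meq B_intc[OF s] by blast
  then have "n * m' - n' * m \<ge> 0" by (rule M_int)
  then show ?thesis using n by (simp add: divide_simps) (simp add: mult.commute of_int_mult[symmetric] del: of_int_mult)
qed

definition lowset where
  "lowset x = {real_of_int m / real_of_int n | m n. n > 0 \<and> (of_int n * fst x - of_int m * snd x, snd x) \<in> M}"

definition chi where "chi x = (if x \<in> B then Sup (lowset x) else 0)"

lemma low_ne: assumes "(r, s) \<in> B" shows "lowset (r, s) \<noteq> {}"
proof -
  obtain K where K: "P (r + of_nat K * s)" using assms by (auto elim: bdE)
  have "(of_int 1 * r - of_int (- int K) * s, s) \<in> M"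
  proof -
    have "(r + of_nat K * s, s) \<in> B" using B_lin[OF assms, of 1 "- int K"] by simp
    then have "(r + of_nat K * s, s) \<in> M" using MA K unfolding Apos_def by auto
    then show ?thesis by simp
  qed
  then have "real_of_int (- int K) / real_of_int 1 \<in> lowset (r, s)" unfolding lowset_def by fastforce
  then show ?thesis by blast
qed

lemma low_bdd: assumes "(r, s) \<in> B" shows "bdd_above (lowset (r, s))"
proof -
  obtain K where K: "P (of_nat K * s - r)" using assms by (auto elim: bdE)
  have h2: "(of_int (int K) * s - of_int 1 * r, s) \<in> M"
  proof -
    have "(of_nat K * s - r, s) \<in> B" using B_lin2[OF assms, of "int K" 1] by simp
    then have "(of_nat K * s - r, s) \<in> M" using MA K unfolding Apos_def by auto
    then show ?thesis by simp
  qed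
  show ?thesis unfolding bdd_above_def lowset_def
    using Kcore[OF _ _ assms _ h2] by fastforce
qed

lemma K1: assumes "(r, s) \<in> B" "n > 0" "(of_int n * r - of_int m * s, s) \<in> M"
  shows "real_of_int m / real_of_int n \<le> chi (r, s)"
  unfolding chi_def using assms low_bdd[OF assms(1)] by (auto intro!: cSup_upper simp: lowset_def)

lemma K2: assumes "(r, s) \<in> B" "n > 0" "(of_int m * s - of_int n * r, s) \<in> M"
  shows "chi (r, s) \<le> real_of_int m / real_of_int n"
  unfolding chi_def using assms low_ne[OF assms(1)]
  by (auto intro!: cSup_least simp: lowset_def intro: Kcore[OF _ _ assms(1) _ assms(3)])

lemma K3: assumes "(r, s) \<in> B" "n > 0" "chi (r, s) < real_of_int m / real_of_int n"
  shows "(of_int m * s - of_int n * r, s) \<in> M"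
proof (rule ccontr)
  assume "(of_int m * s - of_int n * r, s) \<notin> M"
  then have "negp (of_int m * s - of_int n * r, s) \<in> M" using Mt B_lin2[OF assms(1)] by blast
  then have "(of_int n * r - of_int m * s, s) \<in> M" by (simp add: negp_def)
  then show False using K1[OF assms(1,2)] assms(3) by fastforce
qed

lemma K4: assumes "(r, s) \<in> B" "n > 0" "real_of_int m / real_of_int n < chi (r, s)"
  shows "(of_int n * r - of_int m * s, s) \<in> M"
proof (rule ccontr)
  assume "(of_int n * r - of_int m * s, s) \<notin> M"
  then have "negp (of_int n * r - of_int m * s, s) \<in> M" using Mt B_lin[OF assms(1)] by blast
  then have "(of_int m * s - of_int n * r, s) \<in> M" by (simp add: negp_def)
  then show False using K2[OF assms(1,2)] assms(3) by fastforce
qed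


lemma chi_eq: assumes x: "(r, s) \<in> B" and y: "(r', s') \<in> B" and e: "r * s' = r' * s"
  shows "chi (r, s) = chi (r', s')"
proof -
  have s: "s \<in> Loc le" "s' \<in> Loc le" using x y by (auto elim: bdE)
  have "(of_int n * r - of_int m * s, s) \<in> M \<longleftrightarrow> (of_int n * r' - of_int m * s', s') \<in> M" for n m
  proof -
    have "(of_int n * r - of_int m * s) * s' = of_int n * (r * s') - of_int m * s * s'" by (simp add: algebra_simps)
    also have "\<dots> = of_int n * (r' * s) - of_int m * s * s'" unfolding e ..
    also have "\<dots> = (of_int n * r' - of_int m * s') * s" by (simp add: algebra_simps)
    finally have ee: "loc_eq (of_int n * r - of_int m * s, s) (of_int n * r' - of_int m * s', s')"
      unfolding loc_eq_def by simp
    show ?thesis using Meq[OF _ B_lin[OF y] ee] Meq[OF _ B_lin[OF x] loc_eq_sym[OF ee]] by blast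
  qed
  then have "lowset (r, s) = lowset (r', s')" unfolding lowset_def by auto
  then show ?thesis unfolding chi_def using x y by simp
qed

lemma chi_eq': "x \<in> B \<Longrightarrow> y \<in> B \<Longrightarrow> loc_eq x y \<Longrightarrow> chi x = chi y"
proof -
  assume a: "x \<in> B" "y \<in> B" "loc_eq x y"
  obtain r s r' s' where e: "x = (r, s)" "y = (r', s')" by (metis surj_pair)
  show ?thesis using chi_eq[of r s r' s'] a unfolding e loc_eq_def by simp
qed

lemma chi_const: "chi (of_int c, 1) = of_int c"
proof -
  have b: "(of_int c, 1) \<in> B" using B_intc[OF Loc_1, of c] by simp
  have m: "(of_int 1 * of_int c - of_int c * 1, 1) \<in> M" "(of_int c * 1 - of_int 1 * of_int c, 1) \<in> M"
    using M_const[of 0] by simp_all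
  show ?thesis using K1[OF b _ m(1)] K2[OF b _ m(2)] by simp
qed

lemma chi_nonneg: "x \<in> M \<Longrightarrow> chi x \<ge> 0"
proof -
  assume xM: "x \<in> M"
  obtain r s where e: "x = (r, s)" by (metis surj_pair)
  have b: "(r, s) \<in> B" using xM MB e by auto
  have "(of_int 1 * r - of_int 0 * s, s) \<in> M" using xM e by simp
  then show ?thesis using K1[OF b, of 1 0] e by simp
qed

lemma chi_add: assumes x: "(r, s) \<in> B" and y: "(r', s') \<in> B"
  shows "chi (loc_add (r, s) (r', s')) = chi (r, s) + chi (r', s')"
proof -
  have xy: "(r * s' + r' * s, s * s') \<in> B" using B_add[OF x y] by (simp add: loc_add_def)
  have comb: "loc_add (of_int N * r - of_int M1 * s, s) (of_int N * r' - of_int M2 * s', s')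
     = (of_int N * (r * s' + r' * s) - of_int (M1 + M2) * (s * s'), s * s')" for N M1 M2
    by (simp add: loc_add_def algebra_simps)
  have comb2: "loc_add (of_int M1 * s - of_int N * r, s) (of_int M2 * s' - of_int N * r', s')
     = (of_int (M1 + M2) * (s * s') - of_int N * (r * s' + r' * s), s * s')" for N M1 M2
    by (simp add: loc_add_def algebra_simps)
  have "chi (r, s) + chi (r', s') \<le> chi (r * s' + r' * s, s * s')"
  proof (rule sum_ge_rat)
    fix q1 q2 :: real assume q: "q1 \<in> \<rat>" "q2 \<in> \<rat>" "q1 < chi (r, s)" "q2 < chi (r', s')"
    obtain M1 M2 N where N: "N > 0" "q1 = of_int M1 / of_int N" "q2 = of_int M2 / of_int N"
      using rat_common[OF q(1,2)] by blast
    have "loc_add (of_int N * r - of_int M1 * s, s) (of_int N * r' - of_int M2 * s', s') \<in> M"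
      using K4[OF x N(1)] K4[OF y N(1)] q N by (intro Madd) auto
    then have "real_of_int (M1 + M2) / real_of_int N \<le> chi (r * s' + r' * s, s * s')"
      unfolding comb using K1[OF xy N(1)] by blast
    then show "q1 + q2 \<le> chi (r * s' + r' * s, s * s')" using N by (simp add: add_divide_distrib)
  qed
  moreover have "chi (r * s' + r' * s, s * s') \<le> chi (r, s) + chi (r', s')"
  proof (rule sum_le_rat)
    fix q1 q2 :: real assume q: "q1 \<in> \<rat>" "q2 \<in> \<rat>" "chi (r, s) < q1" "chi (r', s') < q2"
    obtain M1 M2 N where N: "N > 0" "q1 = of_int M1 / of_int N" "q2 = of_int M2 / of_int N"
      using rat_common[OF q(1,2)] by blast
    have "loc_add (of_int M1 * s - of_int N * r, s) (of_int M2 * s' - of_int N * r', s') \<in> M"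
      using K3[OF x N(1)] K3[OF y N(1)] q N by (intro Madd) auto
    then have "chi (r * s' + r' * s, s * s') \<le> real_of_int (M1 + M2) / real_of_int N"
      unfolding comb2 using K2[OF xy N(1)] by blast
    then show "chi (r * s' + r' * s, s * s') \<le> q1 + q2" using N by (simp add: add_divide_distrib)
  qed
  ultimately show ?thesis by (simp add: loc_add_def)
qed

lemma chi_add': "x \<in> B \<Longrightarrow> y \<in> B \<Longrightarrow> chi (loc_add x y) = chi x + chi y"
proof -
  assume a: "x \<in> B" "y \<in> B"
  obtain r s r' s' where e: "x = (r, s)" "y = (r', s')" by (metis surj_pair)
  show ?thesis using chi_add[of r s r' s'] a unfolding e by simp
qed

lemma chi_mult_pos: assumes xM: "(r, s) \<in> M" and yM: "(r', s') \<in> M"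
  shows "chi (loc_mult (r, s) (r', s')) = chi (r, s) * chi (r', s')"
proof -
  have x: "(r, s) \<in> B" and y: "(r', s') \<in> B" using xM yM MB by auto
  have xy: "(r * r', s * s') \<in> B" using B_mult[OF x y] by (simp add: loc_mult_def)
  have xy0: "chi (r * r', s * s') \<ge> 0" using chi_nonneg Mmult[OF xM yM] by (simp add: loc_mult_def)
  have x0: "chi (r, s) \<ge> 0" and y0: "chi (r', s') \<ge> 0" using chi_nonneg xM yM by auto
  have "chi (r, s) * chi (r', s') \<le> chi (r * r', s * s')"
  proof (rule prod_ge_rat[OF x0 y0 xy0])
    fix q1 q2 :: real assume q: "q1 \<in> \<rat>" "q2 \<in> \<rat>" "0 \<le> q1" "q1 < chi (r, s)" "0 \<le> q2" "q2 < chi (r', s')"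
    obtain M1 M2 N where N: "N > 0" "q1 = of_int M1 / of_int N" "q2 = of_int M2 / of_int N"
      using rat_common[OF q(1,2)] by blast
    have M0: "M1 \<ge> 0" "M2 \<ge> 0" using q(3,5) N by (auto simp: zero_le_divide_iff)
    define X where "X = (of_int N * r - of_int M1 * s, s)"
    define Y where "Y = (of_int N * r' - of_int M2 * s', s')"
    have XY: "X \<in> M" "Y \<in> M" unfolding X_def Y_def using K4[OF x N(1)] K4[OF y N(1)] q N by auto
    have "loc_add (loc_add (loc_mult X Y) (loc_mult (of_int M1, 1) Y)) (loc_mult (of_int M2, 1) X) \<in> M"
      using XY M_const M0 by (intro Madd Mmult) auto
    moreover have "loc_eq (loc_add (loc_add (loc_mult X Y) (loc_mult (of_int M1, 1) Y)) (loc_mult (of_int M2, 1) X))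
       (of_int (N * N) * (r * r') - of_int (M1 * M2) * (s * s'), s * s')"
      unfolding X_def Y_def loc_eq_def loc_add_def loc_mult_def by (simp add: algebra_simps)
    ultimately have "(of_int (N * N) * (r * r') - of_int (M1 * M2) * (s * s'), s * s') \<in> M"
      using Meq B_lin[OF xy] by blast
    then have "real_of_int (M1 * M2) / real_of_int (N * N) \<le> chi (r * r', s * s')"
      using K1[OF xy, of "N * N" "M1 * M2"] N(1) by (simp only: mult_pos_pos)
    then show "q1 * q2 \<le> chi (r * r', s * s')" using N by simp
  qed
  moreover have "chi (r * r', s * s') \<le> chi (r, s) * chi (r', s')"
  proof (rule prod_le_rat[OF x0 y0])
    fix q1 q2 :: real assume q: "q1 \<in> \<rat>" "q2 \<in> \<rat>" "chi (r, s) < q1" "chi (r', s') < q2"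
    obtain M1 M2 N where N: "N > 0" "q1 = of_int M1 / of_int N" "q2 = of_int M2 / of_int N"
      using rat_common[OF q(1,2)] by blast
    have "real_of_int M1 / real_of_int N > 0" "real_of_int M2 / real_of_int N > 0" using q(3,4) x0 y0 N by auto
    then have M0: "M1 \<ge> 0" "M2 \<ge> 0" using N(1) by (auto simp: zero_less_divide_iff)
    define X where "X = (of_int M1 * s - of_int N * r, s)"
    define Y where "Y = (of_int M2 * s' - of_int N * r', s')"
    have XY: "X \<in> M" "Y \<in> M" unfolding X_def Y_def using K3[OF x N(1)] K3[OF y N(1)] q N by auto
    have "loc_add (loc_mult (of_int M2, 1) X) (loc_mult (of_int N, 1) (loc_mult (r, s) Y)) \<in> M"
      using XY M_const M0 N(1) xM by (intro Madd Mmult) auto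
    moreover have "loc_eq (loc_add (loc_mult (of_int M2, 1) X) (loc_mult (of_int N, 1) (loc_mult (r, s) Y)))
       (of_int (M1 * M2) * (s * s') - of_int (N * N) * (r * r'), s * s')"
      unfolding X_def Y_def loc_eq_def loc_add_def loc_mult_def by (simp add: algebra_simps)
    ultimately have "(of_int (M1 * M2) * (s * s') - of_int (N * N) * (r * r'), s * s') \<in> M"
      using Meq B_lin2[OF xy] by blast
    then have "chi (r * r', s * s') \<le> real_of_int (M1 * M2) / real_of_int (N * N)"
      using K2[OF xy, of "N * N" "M1 * M2"] N(1) by (simp only: mult_pos_pos)
    then show "chi (r * r', s * s') \<le> q1 * q2" using N by simp
  qed
  ultimately show ?thesis by (simp add: loc_mult_def)
qed

lemma chi_shift: assumes x: "(r, s) \<in> B" shows "chi (r + of_int K * s, s) = chi (r, s) + of_int K"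
proof -
  have b: "(r + of_int K * s, s) \<in> B" using B_lin[OF x, of 1 "- K"] by simp
  have "chi (loc_add (r, s) (of_int K, 1)) = chi (r, s) + of_int K"
    using chi_add[OF x, of "of_int K" 1] B_intc[OF Loc_1, of K] chi_const by simp
  moreover have "loc_eq (loc_add (r, s) (of_int K, 1)) (r + of_int K * s, s)"
    unfolding loc_eq_def loc_add_def by (simp add: algebra_simps)
  moreover have "(of_int K, 1) \<in> B" using B_intc[OF Loc_1, of K] by simp
  ultimately show ?thesis using chi_eq'[OF B_add'[OF x] b] by simp
qed


lemma chi_mult: assumes x: "(r, s) \<in> B" and y: "(r', s') \<in> B"
  shows "chi (loc_mult (r, s) (r', s')) = chi (r, s) * chi (r', s')"
proof -
  obtain n where n: "P (r + of_nat n * s)" using x by (auto elim: bdE)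
  obtain n' where n': "P (r' + of_nat n' * s')" using y by (auto elim: bdE)
  have sP: "P s" "P s'" using x y by (auto elim!: bdE intro: Loc_P)
  define K :: int where "K = int (n + n')"
  have K0: "K \<ge> 0" unfolding K_def by simp
  have "P ((r + of_nat n * s) + of_nat n' * s)" using n sP P_nat P_mult P_add by metis
  then have PK: "P (r + of_int K * s)" unfolding K_def by (simp add: algebra_simps)
  have "P ((r' + of_nat n' * s') + of_nat n * s')" using n' sP P_nat P_mult P_add by metis
  then have PK': "P (r' + of_int K * s')" unfolding K_def by (simp add: algebra_simps)
  have bK: "(r + of_int K * s, s) \<in> B" using B_lin[OF x, of 1 "- K"] by simp
  have bK': "(r' + of_int K * s', s') \<in> B" using B_lin[OF y, of 1 "- K"] by simp
  have xK: "(r + of_int K * s, s) \<in> M" using MA bK PK unfolding Apos_def by auto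
  have yK: "(r' + of_int K * s', s') \<in> M" using MA bK' PK' unfolding Apos_def by auto
  have cK: "(of_int K, 1) \<in> M" using M_const K0 by blast
  have cB: "(of_int K, 1) \<in> B" "(of_int (K * K), 1) \<in> B" using B_intc[OF Loc_1, of K] B_intc[OF Loc_1, of "K * K"] by simp_all
  define L where "L = loc_add (loc_mult (r + of_int K * s, s) (r' + of_int K * s', s')) (of_int (K * K), 1)"
  define R where "R = loc_add (loc_add (loc_mult (r, s) (r', s')) (loc_mult (of_int K, 1) (r + of_int K * s, s)))
      (loc_mult (of_int K, 1) (r' + of_int K * s', s'))"
  have LB: "L \<in> B" unfolding L_def using bK bK' cB by (intro B_add' B_mult') auto
  have RB: "R \<in> B" unfolding R_def using x y bK bK' cB by (intro B_add' B_mult') auto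
  have "loc_eq L R" unfolding L_def R_def loc_eq_def loc_add_def loc_mult_def by (simp add: algebra_simps)
  then have LR: "chi L = chi R" using chi_eq' LB RB by blast
  have "chi L = chi (r + of_int K * s, s) * chi (r' + of_int K * s', s') + of_int (K * K)"
    unfolding L_def using chi_add'[OF B_mult'[OF bK bK'] cB(2)] chi_mult_pos[OF xK yK] chi_const[of "K * K"] by simp
  also have "\<dots> = (chi (r, s) + of_int K) * (chi (r', s') + of_int K) + of_int K * of_int K"
    using chi_shift[OF x] chi_shift[OF y] by simp
  finally have L: "chi L = (chi (r, s) + of_int K) * (chi (r', s') + of_int K) + of_int K * of_int K" .
  have "chi R = chi (loc_mult (r, s) (r', s')) + chi (of_int K, 1) * chi (r + of_int K * s, s) + chi (of_int K, 1) * chi (r' + of_int K * s', s')"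
    unfolding R_def using chi_add'[OF B_add'[OF B_mult'[OF x y] B_mult'[OF cB(1) bK]] B_mult'[OF cB(1) bK']]
      chi_add'[OF B_mult'[OF x y] B_mult'[OF cB(1) bK]] chi_mult_pos[OF cK xK] chi_mult_pos[OF cK yK] by simp
  also have "\<dots> = chi (loc_mult (r, s) (r', s')) + of_int K * (chi (r, s) + of_int K) + of_int K * (chi (r', s') + of_int K)"
    using chi_shift[OF x] chi_shift[OF y] chi_const by simp
  finally have R: "chi R = chi (loc_mult (r, s) (r', s')) + of_int K * (chi (r, s) + of_int K) + of_int K * (chi (r', s') + of_int K)" .
  show ?thesis using LR L R by (simp add: algebra_simps)
qed

lemma chi_K: "chi \<in> Kset le"
proof -
  have 1: "\<forall>a\<in>B. \<forall>b\<in>B. loc_eq a b \<longrightarrow> chi a = chi b" using chi_eq' by blast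
  have 2: "chi (1, 1) = 1" using chi_const[of 1] by simp
  have 3: "\<forall>a\<in>B. \<forall>b\<in>B. chi (loc_add a b) = chi a + chi b" using chi_add' by blast
  have 4: "\<forall>a\<in>B. \<forall>b\<in>B. chi (loc_mult a b) = chi a * chi b"
  proof (intro ballI)
    fix a b assume a: "a \<in> B" and b: "b \<in> B"
    obtain r s r' s' where e: "a = (r, s)" "b = (r', s')" by (metis surj_pair)
    show "chi (loc_mult a b) = chi a * chi b" using chi_mult a b unfolding e by blast
  qed
  have 5: "\<forall>a\<in>B. loc_le le (0, 1) a \<longrightarrow> chi a \<ge> 0"
  proof (intro ballI impI)
    fix a assume a: "a \<in> B" "loc_le le (0, 1) a"
    then have "P (fst a)" unfolding loc_le_def by simp
    then have "a \<in> M" using MA a(1) unfolding Apos_def by blast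
    then show "chi a \<ge> 0" by (rule chi_nonneg)
  qed
  have 6: "\<forall>a. a \<notin> B \<longrightarrow> chi a = 0" unfolding chi_def by simp
  show ?thesis unfolding Kset_def using 1 2 3 4 5 6 by blast
qed

end

theorem positivstellensatz:
  assumes x: "(r, u) \<in> B" and h: "\<And>\<psi>. \<psi> \<in> Kset le \<Longrightarrow> \<psi> (r, u) \<ge> 0"
  shows "P r"
proof (rule ccontr)
  assume nr: "\<not> P r"
  obtain k :: nat where k: "k \<ge> 1" "\<not> P (of_nat k * r + u)"
    using archI[of r u] nr by blast
  define a where "a = of_nat k * r + u"
  have e: "(- a, u) \<in> B"
  proof -
    have "(of_int (- int k) * r - of_int 1 * u, u) \<in> B" using B_lin[OF x] .
    moreover have "of_int (- int k) * r - of_int 1 * u = - a" unfolding a_def by (simp add: algebra_simps)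
    ultimately show ?thesis by simp
  qed
  obtain M where M: "cone M" "(-1, 1) \<notin> M" "(- a, u) \<in> M" "\<forall>y\<in>B. y \<in> M \<or> negp y \<in> M"
    using exists_total_cone[OF e] k unfolding a_def by blast
  have "(of_int (- 1) * u - of_int (int k) * r, u) \<in> M" using M(3) unfolding a_def by (simp add: algebra_simps)
  then have "chi M (r, u) \<le> real_of_int (- 1) / real_of_int (int k)" using K2[OF M(1,2,4) x, of "int k" "- 1"] k(1) by simp
  moreover have "real_of_int (- 1) / real_of_int (int k) < 0" using k(1) by simp
  moreover have "chi M (r, u) \<ge> 0" using h chi_K[OF M(1,2,4)] by blast
  ultimately show False by linarith
qed

end

context POR begin

lemma sos_elem:
  assumes psi0: "\<psi>0 \<in> Kset le" and eps: "\<epsilon> > 0" and F: "finite F"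
  shows "\<forall>L::real. \<exists>bn bd. (bn, bd) \<in> B \<and> P bn \<and> \<psi>0 (bn, bd) \<le> real (card F) \<and>
     (\<forall>\<psi>\<in>Kset le. (\<exists>i\<in>F. \<bar>\<psi> i - \<psi>0 i\<bar> \<ge> \<epsilon>) \<longrightarrow> \<psi> (bn, bd) \<ge> L)"
  using F
proof (induction F rule: finite_induct)
  case empty
  show ?case
  proof
    fix L :: real
    have "(0, 1) \<in> B" using B_intc[OF Loc_1, of 0] by simp
    moreover have "\<psi>0 (0, 1) \<le> 0" using K_zero[OF psi0 Loc_1] by simp
    ultimately show "\<exists>bn bd. (bn, bd) \<in> B \<and> P bn \<and> \<psi>0 (bn, bd) \<le> real (card {}) \<and>
     (\<forall>\<psi>\<in>Kset le. (\<exists>i\<in>{}. \<bar>\<psi> i - \<psi>0 i\<bar> \<ge> \<epsilon>) \<longrightarrow> \<psi> (bn, bd) \<ge> L)"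
      using P_0 by auto
  qed
next
  case (insert i F)
  show ?case
  proof
    fix L :: real
    obtain bn bd where b: "(bn, bd) \<in> B" "P bn" "\<psi>0 (bn, bd) \<le> real (card F)"
      and bL: "\<And>\<psi>. \<psi> \<in> Kset le \<Longrightarrow> (\<exists>i\<in>F. \<bar>\<psi> i - \<psi>0 i\<bar> \<ge> \<epsilon>) \<Longrightarrow> \<psi> (bn, bd) \<ge> L"
      using insert.IH by blast
    have cardI: "card (insert i F) = card F + 1" using insert by simp
    show "\<exists>bn bd. (bn, bd) \<in> B \<and> P bn \<and> \<psi>0 (bn, bd) \<le> real (card (insert i F)) \<and>
     (\<forall>\<psi>\<in>Kset le. (\<exists>j\<in>insert i F. \<bar>\<psi> j - \<psi>0 j\<bar> \<ge> \<epsilon>) \<longrightarrow> \<psi> (bn, bd) \<ge> L)"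
    proof (cases "i \<in> B")
      case False
      have "\<bar>\<psi> i - \<psi>0 i\<bar> < \<epsilon>" if "\<psi> \<in> Kset le" for \<psi>
        using K_out[OF that False] K_out[OF psi0 False] eps by simp
      then have "\<forall>\<psi>\<in>Kset le. (\<exists>j\<in>insert i F. \<bar>\<psi> j - \<psi>0 j\<bar> \<ge> \<epsilon>) \<longrightarrow> \<psi> (bn, bd) \<ge> L"
        using bL by fastforce
      moreover have "\<psi>0 (bn, bd) \<le> real (card (insert i F))" using b(3) cardI by simp
      ultimately show ?thesis using b(1,2) by blast
    next
      case True
      obtain r t where it: "i = (r, t)" by (metis surj_pair)
      have rt: "(r, t) \<in> B" using True it by simp
      have t: "t \<in> Loc le" using rt by (auto elim: bdE)
      define L' where "L' = sqrt \<bar>L\<bar> + 1"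
      obtain N :: nat where N: "L' / \<epsilon> < real N" using reals_Archimedean2 by blast
      have NL: "real N * \<epsilon> > L'" using N eps by (simp add: divide_less_eq)
      define m where "m = \<lfloor>real N * \<psi>0 i\<rfloor>"
      have m1: "real_of_int m \<le> real N * \<psi>0 i" "real N * \<psi>0 i < real_of_int m + 1"
        unfolding m_def by linarith+
      define X where "X = of_int (int N) * r - of_int m * t"
      have XB: "(X, t) \<in> B" unfolding X_def using B_lin[OF rt] .
      have sqB: "(X * X, t * t) \<in> B" using B_mult[OF XB XB] by (simp add: loc_mult_def)
      have psq: "\<psi> (X * X, t * t) = (real N * \<psi> i - real_of_int m)\<^sup>2" if "\<psi> \<in> Kset le" for \<psi>
        using K_sq[OF that XB] K_lin[OF that rt, of "int N" m] unfolding X_def it by simp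
      define bn' where "bn' = bn * (t * t) + X * X * bd"
      define bd' where "bd' = bd * (t * t)"
      have e': "loc_add (bn, bd) (X * X, t * t) = (bn', bd')" unfolding bn'_def bd'_def loc_add_def by simp
      have b'B: "(bn', bd') \<in> B" using B_add[OF b(1) sqB] e' by simp
      have tP: "P t" "P bd" using t b(1) Loc_P by (auto elim: bdE)
      have Pb': "P bn'" unfolding bn'_def using b(2) tP P_sq[of X] P_sq[of t] by (intro P_am) auto
      have psi': "\<psi> (bn', bd') = \<psi> (bn, bd) + (real N * \<psi> i - real_of_int m)\<^sup>2" if "\<psi> \<in> Kset le" for \<psi>
        using K_add[OF that b(1) sqB] psq[OF that] e' by simp
      have "\<psi>0 (bn', bd') \<le> real (card (insert i F))"
      proof -
        have "(real N * \<psi>0 i - real_of_int m)\<^sup>2 \<le> 1"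
          using m1 by (intro power_le_one_iff[THEN iffD2] abs_square_le_1[THEN iffD2]) (auto simp: abs_le_iff)
        then show ?thesis using psi'[OF psi0] b(3) cardI by simp
      qed
      moreover have "\<psi> (bn', bd') \<ge> L" if psi: "\<psi> \<in> Kset le" and ex: "\<exists>j\<in>insert i F. \<bar>\<psi> j - \<psi>0 j\<bar> \<ge> \<epsilon>" for \<psi>
      proof -
        have sq0: "(real N * \<psi> i - real_of_int m)\<^sup>2 \<ge> 0" by simp
        have b0: "\<psi> (bn, bd) \<ge> 0" using K_pos[OF psi b(1,2)] .
        show ?thesis
        proof (cases "\<bar>\<psi> i - \<psi>0 i\<bar> \<ge> \<epsilon>")
          case True
          have "real N * \<bar>\<psi> i - \<psi>0 i\<bar> \<ge> real N * \<epsilon>" using True by (simp add: mult_left_mono)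
          moreover have "\<bar>real N * \<psi> i - real N * \<psi>0 i\<bar> = real N * \<bar>\<psi> i - \<psi>0 i\<bar>"
            by (simp add: abs_mult right_diff_distrib[symmetric])
          ultimately have "\<bar>real N * \<psi> i - real N * \<psi>0 i\<bar> \<ge> L'" using NL by linarith
          then have "\<bar>real N * \<psi> i - real_of_int m\<bar> \<ge> sqrt \<bar>L\<bar>" using m1 unfolding L'_def by linarith
          then have "(real N * \<psi> i - real_of_int m)\<^sup>2 \<ge> (sqrt \<bar>L\<bar>)\<^sup>2"
            by (metis abs_ge_zero power2_abs power_mono real_sqrt_ge_zero)
          then have "(real N * \<psi> i - real_of_int m)\<^sup>2 \<ge> L" by simp
          then show ?thesis using psi'[OF psi] b0 by linarith
        next
          case False
          then have "\<exists>j\<in>F. \<bar>\<psi> j - \<psi>0 j\<bar> \<ge> \<epsilon>" using ex by auto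
          then have "\<psi> (bn, bd) \<ge> L" using bL psi by blast
          then show ?thesis using psi'[OF psi] sq0 by linarith
        qed
      qed
      ultimately show ?thesis using b'B Pb' by blast
    qed
  qed
qed

lemma dense_core:
  assumes s: "s \<in> Loc le" and psi0: "\<psi>0 \<in> Kset le" and eps: "\<epsilon> > 0" and F: "finite F"
  shows "\<exists>\<psi>\<in>Kset le. \<psi> (1, s) > 0 \<and> (\<forall>i\<in>F. \<bar>\<psi> i - \<psi>0 i\<bar> < \<epsilon>)"
proof (rule ccontr)
  assume "\<not> ?thesis"
  then have nb: "\<And>\<psi>. \<psi> \<in> Kset le \<Longrightarrow> (\<forall>i\<in>F. \<bar>\<psi> i - \<psi>0 i\<bar> < \<epsilon>) \<Longrightarrow> \<psi> (1, s) \<le> 0" by force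
  define Li :: int where "Li = int (card F) + 1"
  obtain bn bd where b: "(bn, bd) \<in> B" "P bn" "\<psi>0 (bn, bd) \<le> real (card F)"
    and bL: "\<And>\<psi>. \<psi> \<in> Kset le \<Longrightarrow> (\<exists>i\<in>F. \<bar>\<psi> i - \<psi>0 i\<bar> \<ge> \<epsilon>) \<Longrightarrow> \<psi> (bn, bd) \<ge> real_of_int Li"
    using sos_elem[OF psi0 eps F] by blast
  define Y where "Y = (of_int 1 * bn - of_int Li * bd, bd)"
  have YB: "Y \<in> B" unfolding Y_def using B_lin[OF b(1)] .
  have Yv: "\<psi> Y = \<psi> (bn, bd) - of_int Li" if "\<psi> \<in> Kset le" for \<psi>
    unfolding Y_def using K_lin[OF that b(1), of 1 Li] by simp
  define Z where "Z = loc_mult (1, s) Y"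
  have ZB: "Z \<in> B" unfolding Z_def using B_mult'[OF B_den[OF s] YB] .
  have "\<psi> Z \<ge> 0" if psi: "\<psi> \<in> Kset le" for \<psi>
  proof -
    have Zv: "\<psi> Z = \<psi> (1, s) * (\<psi> (bn, bd) - of_int Li)"
      unfolding Z_def using K_mult[OF psi B_den[OF s] YB] Yv[OF psi] by simp
    have d0: "\<psi> (1, s) \<ge> 0" using K_den_nonneg[OF psi s] .
    show ?thesis
    proof (cases "\<forall>i\<in>F. \<bar>\<psi> i - \<psi>0 i\<bar> < \<epsilon>")
      case True
      then have "\<psi> (1, s) = 0" using nb[OF psi] d0 by force
      then show ?thesis using Zv by simp
    next
      case False
      then have "\<psi> (bn, bd) \<ge> real_of_int Li" using bL[OF psi] by force
      then show ?thesis using Zv d0 by simp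
    qed
  qed
  moreover obtain zn zd where ze: "Z = (zn, zd)" by (metis surj_pair)
  ultimately have "P zn" using positivstellensatz ZB by simp
  then have "P (bn - of_int Li * bd)" using ze unfolding Z_def Y_def loc_mult_def by simp
  then have "\<psi>0 Y \<ge> 0" using K_pos[OF psi0] YB unfolding Y_def by simp
  then have "\<psi>0 (bn, bd) \<ge> of_int Li" using Yv[OF psi0] by simp
  then show False using b(3) unfolding Li_def by simp
qed

end

context POR begin

abbreviation KT where "KT \<equiv> Ktop le"

lemma topK: "topspace KT = Kset le" unfolding Ktop_def by simp

lemma subK: "subtopology KT V = top_of_set (Kset le \<inter> V)"
  unfolding Ktop_def by (simp add: subtopology_subtopology)

lemma eval_cont: "continuous_map (subtopology KT V) euclideanreal (\<lambda>\<psi>. \<psi> a)"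
proof -
  have "continuous_on UNIV (\<lambda>\<psi> :: 'a \<times> 'a \<Rightarrow> real. \<psi> a)" by (rule continuous_on_product_coordinates)
  then have "continuous_on (Kset le \<inter> V) (\<lambda>\<psi> :: 'a \<times> 'a \<Rightarrow> real. \<psi> a)" using continuous_on_subset by blast
  then show ?thesis unfolding subK continuous_map_iff_continuous .
qed

lemma Ofin_open: "openin KT (Ofin le s)"
proof -
  have "open {\<psi> :: 'a \<times> 'a \<Rightarrow> real. (\<lambda>_. 0) \<psi> < \<psi> (1, s)}"
    by (rule open_Collect_less) (simp_all add: continuous_on_const)
  moreover have "Ofin le s = {\<psi>. 0 < \<psi> (1, s)} \<inter> Kset le" unfolding Ofin_def by auto
  ultimately show ?thesis unfolding Ktop_def openin_subtopology using open_openin by blast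
qed

lemma Ofin_sub: "Ofin le s \<subseteq> Kset le" unfolding Ofin_def by auto

lemma Ofin_dense: assumes s: "s \<in> Loc le" shows "KT closure_of (Ofin le s) = topspace KT"
  unfolding dense_intersects_open
proof (intro allI impI)
  fix T assume T: "openin KT T \<and> T \<noteq> {}"
  obtain U where U: "open U" "T = U \<inter> Kset le"
    using T unfolding Ktop_def openin_subtopology using open_openin by blast
  obtain \<psi>0 where p0: "\<psi>0 \<in> T" using T by blast
  have p0K: "\<psi>0 \<in> Kset le" "\<psi>0 \<in> U" using p0 U by auto
  have "openin (product_topology (\<lambda>i. euclidean) UNIV) U" using U(1) unfolding open_fun_def .
  then obtain X where X: "\<psi>0 \<in> (\<Pi>\<^sub>E i\<in>UNIV. X i)" "\<And>i. openin euclidean (X i)"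
    "finite {i. X i \<noteq> topspace euclidean}" "(\<Pi>\<^sub>E i\<in>UNIV. X i) \<subseteq> U"
    using product_topology_open_contains_basis[OF _ p0K(2)] by blast
  define F where "F = {i. X i \<noteq> UNIV}"
  have F: "finite F" using X(3) unfolding F_def by simp
  have Xi: "\<psi>0 i \<in> X i" for i using X(1) by auto
  have "\<exists>e>0. ball (\<psi>0 i) e \<subseteq> X i" for i
  proof -
    have "open (X i)" using X(2)[of i] open_openin by blast
    then show ?thesis using Xi[of i] open_contains_ball by blast
  qed
  then obtain e where e: "\<And>i. e i > 0" "\<And>i. ball (\<psi>0 i) (e i) \<subseteq> X i" by metis
  define \<epsilon> where "\<epsilon> = Min (insert 1 (e ` F))"
  have eps: "\<epsilon> > 0" unfolding \<epsilon>_def using F e(1) by (subst Min_gr_iff) auto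
  have epsle: "\<epsilon> \<le> e i" if "i \<in> F" for i unfolding \<epsilon>_def using F that by (intro Min_le) auto
  obtain \<psi> where psi: "\<psi> \<in> Kset le" "\<psi> (1, s) > 0" "\<forall>i\<in>F. \<bar>\<psi> i - \<psi>0 i\<bar> < \<epsilon>"
    using dense_core[OF s p0K(1) eps F] by blast
  have "\<psi> i \<in> X i" for i
  proof (cases "i \<in> F")
    case True
    then have "\<psi> i \<in> ball (\<psi>0 i) (e i)" using psi(3) epsle[OF True] by (auto simp: dist_real_def abs_minus_commute)
    then show ?thesis using e(2) by blast
  next
    case False then show ?thesis unfolding F_def by auto
  qed
  then have "\<psi> \<in> U" using X(4) by (auto simp: PiE_iff)
  then have "\<psi> \<in> T" using U psi by auto
  moreover have "\<psi> \<in> Ofin le s" unfolding Ofin_def using psi by auto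
  ultimately show "Ofin le s \<inter> T \<noteq> {}" by blast
qed

lemma bd_exists: "\<exists>s. s \<in> Loc le \<and> (r, s) \<in> B"
proof -
  obtain t where t: "t \<in> Loc le" "P (r + t)" "P (t - r)" using lcz_bound by blast
  then have "(r, t) \<in> B" by (intro bdI[where n = 1]) auto
  then show ?thesis using t by blast
qed

definition s0 where "s0 r = (SOME s. s \<in> Loc le \<and> (r, s) \<in> B)"

lemma s0: "s0 r \<in> Loc le" "(r, s0 r) \<in> B"
  using someI_ex[OF bd_exists[of r]] unfolding s0_def by auto

lemma hat_rep_eq: "hat_rep le r = (Ofin le (s0 r), \<lambda>\<psi>. if \<psi> \<in> Ofin le (s0 r) then r_s r (s0 r) \<psi> else 0)"
  unfolding hat_rep_def s0_def Let_def by simp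

lemma rs_cont: assumes "(r, s) \<in> B" shows "continuous_map (subtopology KT (Ofin le s)) euclideanreal (r_s r s)"
  unfolding r_s_def
proof (intro continuous_map_real_mult continuous_map_real_inverse eval_cont)
  fix \<psi> assume "\<psi> \<in> topspace (subtopology KT (Ofin le s))"
  then show "\<psi> (1, s) \<noteq> 0" unfolding Ofin_def by auto
qed

lemma dense_open_Ofin: "s \<in> Loc le \<Longrightarrow> openin KT (Ofin le s) \<and> KT closure_of (Ofin le s) = topspace KT"
  using Ofin_open Ofin_dense by blast

lemma hat_rep_ae: "ae_rep KT (fst (hat_rep le r)) (snd (hat_rep le r))"
proof -
  have c: "continuous_map (subtopology KT (Ofin le (s0 r))) euclideanreal (\<lambda>\<psi>. if \<psi> \<in> Ofin le (s0 r) then r_s r (s0 r) \<psi> else 0)"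
    by (rule continuous_map_eq[OF rs_cont[OF s0(2)]]) auto
  show ?thesis unfolding hat_rep_eq ae_rep_def using dense_open_Ofin[OF s0(1)] c by auto
qed

lemma hat_max_eq: "hat_max le r = ae_max KT (fst (hat_rep le r), snd (hat_rep le r))"
  unfolding hat_max_def by simp

abbreviation D where "D r \<equiv> fst (hat_max le r)"
abbreviation h where "h r \<equiv> snd (hat_max le r)"

lemma D_rep: "ae_rep KT (D r) (h r)"
  unfolding hat_max_eq using ae_max_props(1)[OF hat_rep_ae] .

lemma rs_indep: assumes "(r, s) \<in> B" "(r, s') \<in> B" "\<psi> \<in> Ofin le s" "\<psi> \<in> Ofin le s'"
  shows "r_s r s \<psi> = r_s r s' \<psi>"
proof -
  have psi: "\<psi> \<in> Kset le" "\<psi> (1, s) > 0" "\<psi> (1, s') > 0" using assms(3,4) unfolding Ofin_def by auto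
  have s: "s \<in> Loc le" "s' \<in> Loc le" using assms(1,2) by (auto elim: bdE)
  have "\<psi> (loc_mult (r, s) (1, s')) = \<psi> (r, s) * \<psi> (1, s')" using K_mult[OF psi(1) assms(1) B_den[OF s(2)]] .
  moreover have "\<psi> (loc_mult (r, s') (1, s)) = \<psi> (r, s') * \<psi> (1, s)" using K_mult[OF psi(1) assms(2) B_den[OF s(1)]] .
  moreover have "loc_mult (r, s) (1, s') = loc_mult (r, s') (1, s)" unfolding loc_mult_def by (simp add: mult.commute)
  ultimately have "\<psi> (r, s) * \<psi> (1, s') = \<psi> (r, s') * \<psi> (1, s)" by simp
  then show ?thesis unfolding r_s_def using psi by (simp add: field_simps)
qed

lemma D_core: assumes s: "s \<in> Loc le" "(r, s) \<in> B"
  shows "\<exists>W. openin KT W \<and> KT closure_of W = topspace KT \<and> W \<subseteq> D r \<and> W \<subseteq> Ofin le s \<and> (\<forall>\<psi>\<in>W. h r \<psi> = r_s r s \<psi>)"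
proof -
  have "ae_eq KT (hat_max le r) (fst (hat_rep le r), snd (hat_rep le r))"
    unfolding hat_max_eq using ae_max_props(2)[OF hat_rep_ae] .
  then obtain W where W: "openin KT W" "KT closure_of W = topspace KT" "W \<subseteq> D r \<inter> Ofin le (s0 r)"
    "\<forall>\<psi>\<in>W. h r \<psi> = snd (hat_rep le r) \<psi>"
    unfolding ae_eq_def hat_rep_eq by auto
  define W' where "W' = W \<inter> Ofin le s"
  have "openin KT W'" unfolding W'_def using W(1) Ofin_open by blast
  moreover have "KT closure_of W' = topspace KT" unfolding W'_def using dense_Int[OF W(1,2) Ofin_open Ofin_dense[OF s(1)]] .
  moreover have "\<forall>\<psi>\<in>W'. h r \<psi> = r_s r s \<psi>"
  proof
    fix \<psi> assume p: "\<psi> \<in> W'"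
    then have "h r \<psi> = r_s r (s0 r) \<psi>" using W(3,4) unfolding W'_def hat_rep_eq by auto
    also have "\<dots> = r_s r s \<psi>" using rs_indep[OF s0(2) s(2)] p W(3) unfolding W'_def by auto
    finally show "h r \<psi> = r_s r s \<psi>" .
  qed
  ultimately show ?thesis using W(3) unfolding W'_def by blast
qed

lemma D_extend:
  assumes rep: "ae_rep KT V g" and s: "s \<in> Loc le" "(r, s) \<in> B"
    and W: "openin KT W" "KT closure_of W = topspace KT" "W \<subseteq> V" "W \<subseteq> Ofin le s" "\<forall>\<psi>\<in>W. g \<psi> = r_s r s \<psi>"
  shows "V \<subseteq> D r \<and> (\<forall>\<psi>\<in>V. h r \<psi> = g \<psi>)"
proof -
  define W' where "W' = W \<inter> Ofin le (s0 r)"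
  have "openin KT W'" unfolding W'_def using W(1) Ofin_open by blast
  moreover have "KT closure_of W' = topspace KT" unfolding W'_def
    using dense_Int[OF W(1,2) Ofin_open Ofin_dense[OF s0(1)]] .
  moreover have "W' \<subseteq> V \<inter> fst (hat_rep le r)" unfolding W'_def hat_rep_eq using W(3) by auto
  moreover have "\<forall>\<psi>\<in>W'. g \<psi> = snd (hat_rep le r) \<psi>"
  proof
    fix \<psi> assume p: "\<psi> \<in> W'"
    then have "g \<psi> = r_s r s \<psi>" using W(5) unfolding W'_def by auto
    also have "\<dots> = r_s r (s0 r) \<psi>" using rs_indep[OF s(2) s0(2)] p W(4) unfolding W'_def by auto
    finally show "g \<psi> = snd (hat_rep le r) \<psi>" using p unfolding W'_def hat_rep_eq by auto
  qed
  ultimately have "ae_eq KT (V, g) (fst (hat_rep le r), snd (hat_rep le r))" unfolding ae_eq_def by auto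
  then show ?thesis unfolding hat_max_eq using ae_max_props(3)[OF hat_rep_ae rep] by blast
qed

end

context POR begin

lemma rep_if:
  assumes "openin KT V" "KT closure_of V = topspace KT" "continuous_map (subtopology KT V) euclideanreal G"
  shows "ae_rep KT V (\<lambda>\<psi>. if \<psi> \<in> V then G \<psi> else 0)"
proof -
  have "continuous_map (subtopology KT V) euclideanreal (\<lambda>\<psi>. if \<psi> \<in> V then G \<psi> else 0)"
    by (rule continuous_map_eq[OF assms(3)]) auto
  then show ?thesis unfolding ae_rep_def using assms(1,2) by auto
qed

lemma D_open: "openin KT (D r)" and D_dense: "KT closure_of (D r) = topspace KT"
  and D_cont: "continuous_map (subtopology KT (D r)) euclideanreal (h r)"
  using D_rep[of r] unfolding ae_rep_def by auto

lemma Ofin_1: "Ofin le 1 = Kset le" unfolding Ofin_def using K_one by force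

lemma const_dom: "Kset le \<subseteq> D (of_int c) \<and> (\<forall>\<psi>\<in>Kset le. h (of_int c) \<psi> = of_int c)"
proof -
  have rep: "ae_rep KT (Kset le) (\<lambda>\<psi>. if \<psi> \<in> Kset le then of_int c else 0)"
    using rep_if[of "Kset le" "\<lambda>_. of_int c"] topK by (metis closure_of_topspace continuous_map_const openin_topspace topspace_euclidean UNIV_I)
  have b: "(of_int c, 1) \<in> B" using B_intc[OF Loc_1, of c] by simp
  have "\<forall>\<psi>\<in>Kset le. (if \<psi> \<in> Kset le then of_int c else 0) = r_s (of_int c) 1 \<psi>"
    unfolding r_s_def using K_one K_int1 by simp
  then have "Kset le \<subseteq> D (of_int c) \<and> (\<forall>\<psi>\<in>Kset le. h (of_int c) \<psi> = (if \<psi> \<in> Kset le then of_int c else 0))"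
    using D_extend[OF rep Loc_1 b, of "Kset le"] topK Ofin_1 by (metis closure_of_topspace openin_topspace order_refl)
  then show ?thesis by simp
qed

lemma Ofin_mult: assumes "\<psi> \<in> Ofin le sa" "\<psi> \<in> Ofin le sb" "sa \<in> Loc le" "sb \<in> Loc le"
  shows "\<psi> \<in> Ofin le (sa * sb)" and "\<psi> (1, sa * sb) = \<psi> (1, sa) * \<psi> (1, sb)"
proof -
  have psi: "\<psi> \<in> Kset le" "\<psi> (1, sa) > 0" "\<psi> (1, sb) > 0" using assms unfolding Ofin_def by auto
  show e: "\<psi> (1, sa * sb) = \<psi> (1, sa) * \<psi> (1, sb)"
    using K_mult[OF psi(1) B_den[OF assms(3)] B_den[OF assms(4)]] by (simp add: loc_mult_def)
  show "\<psi> \<in> Ofin le (sa * sb)" unfolding Ofin_def using psi e by simp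
qed

lemma rs_add: assumes psi: "\<psi> \<in> Ofin le sa" "\<psi> \<in> Ofin le sb" and a: "(a, sa) \<in> B" and b: "(b, sb) \<in> B"
  shows "(a + b, sa * sb) \<in> B" "r_s (a + b) (sa * sb) \<psi> = r_s a sa \<psi> + r_s b sb \<psi>"
proof -
  have s: "sa \<in> Loc le" "sb \<in> Loc le" using a b by (auto elim: bdE)
  have K: "\<psi> \<in> Kset le" "\<psi> (1, sa) > 0" "\<psi> (1, sb) > 0" using psi unfolding Ofin_def by auto
  have a': "(a, sa * sb) \<in> B" using B_mult[OF a B_den[OF s(2)]] by (simp add: loc_mult_def)
  have b': "(b, sa * sb) \<in> B" using B_mult[OF b B_den[OF s(1)]] by (simp add: loc_mult_def mult.commute)
  show "(a + b, sa * sb) \<in> B" using B_same_add[OF a' b'] .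
  have ea: "\<psi> (a, sa * sb) = \<psi> (a, sa) * \<psi> (1, sb)"
    using K_mult[OF K(1) a B_den[OF s(2)]] by (simp add: loc_mult_def)
  have eb: "\<psi> (b, sa * sb) = \<psi> (b, sb) * \<psi> (1, sa)"
    using K_mult[OF K(1) b B_den[OF s(1)]] by (simp add: loc_mult_def mult.commute)
  have "\<psi> (a + b, sa * sb) = \<psi> (a, sa) * \<psi> (1, sb) + \<psi> (b, sb) * \<psi> (1, sa)"
    using K_same_add[OF K(1) a' b'] ea eb by simp
  moreover have "\<psi> (1, sa * sb) = \<psi> (1, sa) * \<psi> (1, sb)" using Ofin_mult(2)[OF psi s] .
  ultimately show "r_s (a + b) (sa * sb) \<psi> = r_s a sa \<psi> + r_s b sb \<psi>"
    unfolding r_s_def using K(2,3) by (simp add: field_simps)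
qed

lemma rs_mult: assumes psi: "\<psi> \<in> Ofin le sa" "\<psi> \<in> Ofin le sb" and a: "(a, sa) \<in> B" and b: "(b, sb) \<in> B"
  shows "(a * b, sa * sb) \<in> B" "r_s (a * b) (sa * sb) \<psi> = r_s a sa \<psi> * r_s b sb \<psi>"
proof -
  have s: "sa \<in> Loc le" "sb \<in> Loc le" using a b by (auto elim: bdE)
  have K: "\<psi> \<in> Kset le" "\<psi> (1, sa) > 0" "\<psi> (1, sb) > 0" using psi unfolding Ofin_def by auto
  show "(a * b, sa * sb) \<in> B" using B_mult[OF a b] by (simp add: loc_mult_def)
  have "\<psi> (a * b, sa * sb) = \<psi> (a, sa) * \<psi> (b, sb)" using K_mult[OF K(1) a b] by (simp add: loc_mult_def)
  moreover have "\<psi> (1, sa * sb) = \<psi> (1, sa) * \<psi> (1, sb)" using Ofin_mult(2)[OF psi s] .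
  ultimately show "r_s (a * b) (sa * sb) \<psi> = r_s a sa \<psi> * r_s b sb \<psi>"
    unfolding r_s_def using K(2,3) by (simp add: field_simps)
qed

lemma binop_dom:
  assumes opB: "\<And>sa sb. (a, sa) \<in> B \<Longrightarrow> (b, sb) \<in> B \<Longrightarrow> (c, sa * sb) \<in> B"
    and op: "\<And>\<psi> sa sb. \<psi> \<in> Ofin le sa \<Longrightarrow> \<psi> \<in> Ofin le sb \<Longrightarrow> (a, sa) \<in> B \<Longrightarrow> (b, sb) \<in> B \<Longrightarrow>
      r_s c (sa * sb) \<psi> = f (r_s a sa \<psi>) (r_s b sb \<psi>)"
    and fc: "continuous_map (subtopology KT (D a \<inter> D b)) euclideanreal (\<lambda>\<psi>. f (h a \<psi>) (h b \<psi>))"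
  shows "D a \<inter> D b \<subseteq> D c \<and> (\<forall>\<psi>\<in>D a \<inter> D b. h c \<psi> = f (h a \<psi>) (h b \<psi>))"
proof -
  define V where "V = D a \<inter> D b"
  have Vo: "openin KT V" unfolding V_def using D_open by blast
  have Vd: "KT closure_of V = topspace KT" unfolding V_def using dense_Int[OF D_open D_dense D_open D_dense] .
  have rep: "ae_rep KT V (\<lambda>\<psi>. if \<psi> \<in> V then f (h a \<psi>) (h b \<psi>) else 0)"
    using rep_if[OF Vo Vd] fc unfolding V_def by blast
  obtain Wa where Wa: "openin KT Wa" "KT closure_of Wa = topspace KT" "Wa \<subseteq> D a" "Wa \<subseteq> Ofin le (s0 a)" "\<forall>\<psi>\<in>Wa. h a \<psi> = r_s a (s0 a) \<psi>"
    using D_core[OF s0(1)[of a] s0(2)[of a]] by blast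
  obtain Wb where Wb: "openin KT Wb" "KT closure_of Wb = topspace KT" "Wb \<subseteq> D b" "Wb \<subseteq> Ofin le (s0 b)" "\<forall>\<psi>\<in>Wb. h b \<psi> = r_s b (s0 b) \<psi>"
    using D_core[OF s0(1)[of b] s0(2)[of b]] by blast
  define W where "W = Wa \<inter> Wb"
  have Wo: "openin KT W" unfolding W_def using Wa Wb by blast
  have Wd: "KT closure_of W = topspace KT" unfolding W_def using dense_Int[OF Wa(1,2) Wb(1,2)] .
  have WV: "W \<subseteq> V" unfolding W_def V_def using Wa Wb by blast
  have WO: "W \<subseteq> Ofin le (s0 a * s0 b)" unfolding W_def using Wa(4) Wb(4) Ofin_mult(1)[OF _ _ s0(1)[of a] s0(1)[of b]] by blast
  have cB: "(c, s0 a * s0 b) \<in> B" using opB[OF s0(2)[of a] s0(2)[of b]] .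
  have "\<forall>\<psi>\<in>W. (if \<psi> \<in> V then f (h a \<psi>) (h b \<psi>) else 0) = r_s c (s0 a * s0 b) \<psi>"
  proof
    fix \<psi> assume p: "\<psi> \<in> W"
    then have "\<psi> \<in> V" "h a \<psi> = r_s a (s0 a) \<psi>" "h b \<psi> = r_s b (s0 b) \<psi>" "\<psi> \<in> Ofin le (s0 a)" "\<psi> \<in> Ofin le (s0 b)"
      using WV Wa Wb unfolding W_def by auto
    then show "(if \<psi> \<in> V then f (h a \<psi>) (h b \<psi>) else 0) = r_s c (s0 a * s0 b) \<psi>"
      using op[OF _ _ s0(2)[of a] s0(2)[of b]] by simp
  qed
  then have "V \<subseteq> D c \<and> (\<forall>\<psi>\<in>V. h c \<psi> = (if \<psi> \<in> V then f (h a \<psi>) (h b \<psi>) else 0))"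
    using D_extend[OF rep Loc_mult[OF s0(1)[of a] s0(1)[of b]] cB Wo Wd WV WO] by blast
  then show ?thesis unfolding V_def by simp
qed

end

context POR begin

lemma B_addfrac: assumes a: "(a, sa) \<in> B" and b: "(b, sb) \<in> B" shows "(a + b, sa * sb) \<in> B"
proof -
  have s: "sa \<in> Loc le" "sb \<in> Loc le" using a b by (auto elim: bdE)
  have a': "(a, sa * sb) \<in> B" using B_mult[OF a B_den[OF s(2)]] by (simp add: loc_mult_def)
  have b': "(b, sa * sb) \<in> B" using B_mult[OF b B_den[OF s(1)]] by (simp add: loc_mult_def mult.commute)
  show ?thesis using B_same_add[OF a' b'] .
qed

lemma B_multfrac: assumes a: "(a, sa) \<in> B" and b: "(b, sb) \<in> B" shows "(a * b, sa * sb) \<in> B"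
  using B_mult[OF a b] by (simp add: loc_mult_def)

lemma add_dom: "D a \<inter> D b \<subseteq> D (a + b) \<and> (\<forall>\<psi>\<in>D a \<inter> D b. h (a + b) \<psi> = h a \<psi> + h b \<psi>)"
proof (rule binop_dom[where f = "(+)"])
  show "continuous_map (subtopology KT (D a \<inter> D b)) euclideanreal (\<lambda>\<psi>. h a \<psi> + h b \<psi>)"
  proof (rule continuous_map_add)
    show "continuous_map (subtopology KT (D a \<inter> D b)) euclideanreal (h a)"
      using continuous_map_from_subtopology_mono[OF D_cont[of a], of "D a \<inter> D b"] by blast
    show "continuous_map (subtopology KT (D a \<inter> D b)) euclideanreal (h b)"
      using continuous_map_from_subtopology_mono[OF D_cont[of b], of "D a \<inter> D b"] by blast
  qed
qed (use rs_add B_addfrac in auto)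

lemma mult_dom: "D a \<inter> D b \<subseteq> D (a * b) \<and> (\<forall>\<psi>\<in>D a \<inter> D b. h (a * b) \<psi> = h a \<psi> * h b \<psi>)"
proof (rule binop_dom[where f = "(*)"])
  show "continuous_map (subtopology KT (D a \<inter> D b)) euclideanreal (\<lambda>\<psi>. h a \<psi> * h b \<psi>)"
  proof (rule continuous_map_real_mult)
    show "continuous_map (subtopology KT (D a \<inter> D b)) euclideanreal (h a)"
      using continuous_map_from_subtopology_mono[OF D_cont[of a], of "D a \<inter> D b"] by blast
    show "continuous_map (subtopology KT (D a \<inter> D b)) euclideanreal (h b)"
      using continuous_map_from_subtopology_mono[OF D_cont[of b], of "D a \<inter> D b"] by blast
  qed
qed (use rs_mult B_multfrac in auto)

lemma pos_dom: assumes Pa: "P a" and psi: "\<psi> \<in> D a" shows "h a \<psi> \<ge> 0"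
proof (rule ccontr)
  assume neg: "\<not> h a \<psi> \<ge> 0"
  obtain W where W: "openin KT W" "KT closure_of W = topspace KT" "W \<subseteq> D a" "W \<subseteq> Ofin le (s0 a)" "\<forall>\<psi>\<in>W. h a \<psi> = r_s a (s0 a) \<psi>"
    using D_core[OF s0(1)[of a] s0(2)[of a]] by blast
  have Op: "openin KT {x \<in> topspace KT \<inter> D a. h a x \<in> {..<0}}"
    using cont_preimage_open[OF D_cont[of a] D_open[of a], of "{..<0}"] by simp
  have "\<psi> \<in> topspace KT" using psi openin_subset[OF D_open[of a]] by blast
  then have "\<psi> \<in> {x \<in> topspace KT \<inter> D a. h a x \<in> {..<0}}" using psi neg by simp
  then obtain y where y: "y \<in> W" "y \<in> {x \<in> topspace KT \<inter> D a. h a x \<in> {..<0}}"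
    using dense_meets[OF W(2) Op] by blast
  have yK: "y \<in> Kset le" "y (1, s0 a) > 0" using y(1) W(4) unfolding Ofin_def by auto
  have "r_s a (s0 a) y \<ge> 0" unfolding r_s_def using K_pos[OF yK(1) s0(2) Pa] yK(2) by simp
  then show False using y W(5) by auto
qed

lemma last_dom: assumes s: "s \<in> Loc le" and r: "(r, s) \<in> B" shows "D s \<subseteq> D r"
proof -
  have rep: "ae_rep KT (D s) (\<lambda>\<psi>. if \<psi> \<in> D s then h s \<psi> * \<psi> (r, s) else 0)"
    by (rule rep_if[OF D_open D_dense]) (intro continuous_map_real_mult D_cont eval_cont)
  have ss: "(s, s) \<in> B" using B_intc[OF s, of 1] by simp
  obtain W where W: "openin KT W" "KT closure_of W = topspace KT" "W \<subseteq> D s" "W \<subseteq> Ofin le s" "\<forall>\<psi>\<in>W. h s \<psi> = r_s s s \<psi>"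
    using D_core[OF s ss] by blast
  have "\<forall>\<psi>\<in>W. (if \<psi> \<in> D s then h s \<psi> * \<psi> (r, s) else 0) = r_s r s \<psi>"
  proof
    fix \<psi> assume p: "\<psi> \<in> W"
    then have pK: "\<psi> \<in> Kset le" using W(4) unfolding Ofin_def by auto
    have "\<psi> (s, s) = 1" using K_int[OF pK s, of 1] by simp
    then show "(if \<psi> \<in> D s then h s \<psi> * \<psi> (r, s) else 0) = r_s r s \<psi>"
      using p W(3,5) unfolding r_s_def by auto
  qed
  then show ?thesis using D_extend[OF rep s r W(1,2,3,4)] by blast
qed

end

theorem proposition35:
  fixes le :: "'a::comm_ring_1 \<Rightarrow> 'a \<Rightarrow> bool" and \<phi> :: "'a \<times> 'a \<Rightarrow> real"
  assumes "po_ring le" and "archimedean_po le" and "localizable le"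
    and "\<phi> \<in> Kset le"
  shows "1 \<in> dom_hat le \<phi>
      \<and> (\<forall>a\<in>dom_hat le \<phi>. \<forall>b\<in>dom_hat le \<phi>.
            a + b \<in> dom_hat le \<phi> \<and> - a \<in> dom_hat le \<phi> \<and> a * b \<in> dom_hat le \<phi>)
      \<and> phi_hat le \<phi> 1 = 1
      \<and> (\<forall>a\<in>dom_hat le \<phi>. \<forall>b\<in>dom_hat le \<phi>.
            phi_hat le \<phi> (a + b) = phi_hat le \<phi> a + phi_hat le \<phi> b
          \<and> phi_hat le \<phi> (a * b) = phi_hat le \<phi> a * phi_hat le \<phi> b)
      \<and> (\<forall>a\<in>dom_hat le \<phi>. le 0 a \<longrightarrow> phi_hat le \<phi> a \<ge> 0)
      \<and> (\<forall>r s. s \<in> dom_hat le \<phi> \<inter> Loc le \<and> (r, s) \<in> bdloc le \<longrightarrow> r \<in> dom_hat le \<phi>)"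
proof -
  interpret POR le using assms(1-3) by unfold_locales
  have dom: "dom_hat le \<phi> = {r. \<phi> \<in> D r}" unfolding dom_hat_def ..
  have ph: "\<And>r. phi_hat le \<phi> r = h r \<phi>" unfolding phi_hat_def ..
  have one: "\<phi> \<in> D 1" "h 1 \<phi> = 1" using const_dom[of 1] assms(4) by auto
  have mone: "\<phi> \<in> D (- 1)" "h (- 1) \<phi> = - 1" using const_dom[of "- 1"] assms(4) by auto
  have addc: "a + b \<in> dom_hat le \<phi>" "phi_hat le \<phi> (a + b) = phi_hat le \<phi> a + phi_hat le \<phi> b"
    if "a \<in> dom_hat le \<phi>" "b \<in> dom_hat le \<phi>" for a b
    using add_dom[of a b] that unfolding dom ph by auto
  have multc: "a * b \<in> dom_hat le \<phi>" "phi_hat le \<phi> (a * b) = phi_hat le \<phi> a * phi_hat le \<phi> b"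
    if "a \<in> dom_hat le \<phi>" "b \<in> dom_hat le \<phi>" for a b
    using mult_dom[of a b] that unfolding dom ph by auto
  have negc: "- a \<in> dom_hat le \<phi>" if "a \<in> dom_hat le \<phi>" for a
  proof -
    have "- 1 \<in> dom_hat le \<phi>" using mone unfolding dom by simp
    then have "(- 1) * a \<in> dom_hat le \<phi>" using multc(1) that by blast
    then show ?thesis by simp
  qed
  have posc: "phi_hat le \<phi> a \<ge> 0" if "a \<in> dom_hat le \<phi>" "le 0 a" for a
    using pos_dom[of a \<phi>] that unfolding dom ph by auto
  have lastc: "r \<in> dom_hat le \<phi>" if "s \<in> dom_hat le \<phi> \<inter> Loc le" "(r, s) \<in> bdloc le" for r s
    using last_dom[of s r] that unfolding dom by auto
  show ?thesis using one addc multc negc posc lastc unfolding dom ph by auto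
qed

end
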